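(* Let $X\subset\mathbb{R}$ with the Euclidean metric, and let $(X,T_1,\mu_1)$ and $(X,T_2,\mu_2)$ be two probability preserving systems which are both exponentially mixing for $BV$ against $L^\infty$. Let $(r_n)_n$ be a decreasing sequence of positive numbers and suppose that for some $\varepsilon>0$ there is a constant $c_0>0$ such that for all $n$ sufficiently large \[ \int \mu_1(B(y,r_n))\,d\mu_2(y) \ge c_0\,\frac{(\log n)^3(\log\log n)^{1+\varepsilon}}{n^2}, \] and there is a constant $c_1>0$ such that for all $n$ sufficiently large and $i=1,2$, \[ \frac{\bigl(\int \mu_i(B(y,r_n))\,d\mu_i(y)\bigr)^{1/2}}{\int \mu_1(B(y,r_n))\,d\mu_2(y)} \le c_1\,\frac{n}{(\log n)^2(\log\log n)^{1+\varepsilon}}. \] Then $(\mu_1\times\mu_2)\bigl(\liminf_n E_{n,r_n}^{T_1,T_2}\bigr)=1$.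
   Context: A measure preserving system $(X,T,\mu)$ with $X\subset\mathbb{R}$ is exponentially mixing for $BV$ against $L^\infty$ if there are $C,\theta>0$ such that for all $\psi$ of bounded variation and all $\varphi\in L^\infty(\mu)$ and all $n\ge 0$, $\bigl|\int\psi\cdot\varphi\circ T^n\,d\mu-\int\psi\,d\mu\int\varphi\,d\mu\bigr|\le C\|\psi\|_{BV}\|\varphi\|_{L^\infty}e^{-\theta n}$. For $n\in\mathbb{N}$ and $r>0$, $E_{n,r}^{T_1,T_2}:=\{(x,y)\in X\times X : |T_1^i x- T_2^j y|<r \text{ for some } 0\le i,j<n\}$; $E_{n,r_n}^{T_1,T_2}$ denotes this set with $r=r_n$. $B(y,r)$ is the open ball of radius $r$ about $y$. *)

theory Defs
  imports "HOL-Probability.Probability"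
begin

definition measure_preserving_map :: "'a measure \<Rightarrow> ('a \<Rightarrow> 'a) \<Rightarrow> bool" where
  "measure_preserving_map M T \<longleftrightarrow> T \<in> measurable M M \<and> distr M M T = M"

definition total_variation_on :: "real set \<Rightarrow> (real \<Rightarrow> real) \<Rightarrow> ereal" where
  "total_variation_on X \<psi> =
     (SUP xs \<in> {xs. sorted_wrt (<) xs \<and> set xs \<subseteq> X}.
        ereal (\<Sum>i<length xs - 1. \<bar>\<psi> (xs ! Suc i) - \<psi> (xs ! i)\<bar>))"

definition bounded_variation_on :: "real set \<Rightarrow> (real \<Rightarrow> real) \<Rightarrow> bool" where
  "bounded_variation_on X \<psi> \<longleftrightarrow> total_variation_on X \<psi> < \<infinity> \<and> bounded (\<psi> ` X)"

definition BV_norm :: "real set \<Rightarrow> (real \<Rightarrow> real) \<Rightarrow> real" where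
  "BV_norm X \<psi> = real_of_ereal (total_variation_on X \<psi>) + (SUP x\<in>X. \<bar>\<psi> x\<bar>)"

definition in_Linf :: "'a measure \<Rightarrow> ('a \<Rightarrow> real) \<Rightarrow> bool" where
  "in_Linf M \<phi> \<longleftrightarrow> \<phi> \<in> borel_measurable M \<and> esssup M (\<lambda>x. ereal \<bar>\<phi> x\<bar>) < \<infinity>"

definition Linf_norm :: "'a measure \<Rightarrow> ('a \<Rightarrow> real) \<Rightarrow> real" where
  "Linf_norm M \<phi> = real_of_ereal (esssup M (\<lambda>x. ereal \<bar>\<phi> x\<bar>))"

definition exp_mixing_BV_Linf :: "real set \<Rightarrow> real measure \<Rightarrow> (real \<Rightarrow> real) \<Rightarrow> bool" where
  "exp_mixing_BV_Linf X M T \<longleftrightarrow>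
     (\<exists>C \<theta>. C > 0 \<and> \<theta> > 0 \<and>
       (\<forall>\<psi> \<phi> (n::nat). \<psi> \<in> borel_measurable M \<longrightarrow> bounded_variation_on X \<psi> \<longrightarrow> in_Linf M \<phi> \<longrightarrow>
          \<bar>(\<integral>x. \<psi> x * \<phi> ((T ^^ n) x) \<partial>M) - (\<integral>x. \<psi> x \<partial>M) * (\<integral>x. \<phi> x \<partial>M)\<bar>
            \<le> C * BV_norm X \<psi> * Linf_norm M \<phi> * exp (- \<theta> * real n)))"

definition E_set :: "real set \<Rightarrow> (real \<Rightarrow> real) \<Rightarrow> (real \<Rightarrow> real) \<Rightarrow> nat \<Rightarrow> real \<Rightarrow> (real \<times> real) set" where
  "E_set X T1 T2 n r = {(x, y) \<in> X \<times> X. \<exists>i<n. \<exists>j<n. \<bar>(T1 ^^ i) x - (T2 ^^ j) y\<bar> < r}"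

end

theory Submission
  imports Defs
begin

definition nice :: "(real \<Rightarrow> real) \<Rightarrow> bool" where
  "nice \<psi> \<longleftrightarrow> (\<exists>F G. mono F \<and> mono G \<and> (\<forall>x. 0 \<le> F x \<and> F x \<le> 1) \<and> (\<forall>x. 0 \<le> G x \<and> G x \<le> 1)
      \<and> (\<forall>x. \<psi> x = F x - G x)) \<and> (\<forall>x. 0 \<le> \<psi> x \<and> \<psi> x \<le> 1)"

lemma nice_bounds: "nice \<psi> \<Longrightarrow> 0 \<le> \<psi> x \<and> \<psi> x \<le> 1"
  unfolding nice_def by blast

lemma nice_meas: assumes "nice \<psi>" shows "\<psi> \<in> borel_measurable borel"
proof -
  obtain F G where FG: "mono F" "mono G" "\<And>x. \<psi> x = F x - G x"
    using assms unfolding nice_def by blast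
  have "F \<in> borel_measurable borel" "G \<in> borel_measurable borel"
    using FG borel_measurable_mono by auto
  then have "(\<lambda>x. F x - G x) \<in> borel_measurable borel" by measurable
  moreover have "\<psi> = (\<lambda>x. F x - G x)" using FG by auto
  ultimately show ?thesis by simp
qed

lemma nice_indicator_ball: "r > 0 \<Longrightarrow> nice (indicator (ball a r))"
proof -
  define F where "F = (indicator {a - r<..} :: real \<Rightarrow> real)"
  define G where "G = (indicator {a + r..} :: real \<Rightarrow> real)"
  assume r: "r > 0"
  have "mono F" unfolding F_def mono_def by (auto simp: indicator_def)
  moreover have "mono G" unfolding G_def mono_def by (auto simp: indicator_def)
  moreover have "\<forall>x. indicator (ball a r) x = F x - G x"
    using r unfolding F_def G_def by (auto simp: indicator_def dist_real_def abs_less_iff)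
  moreover have "\<forall>x. 0 \<le> F x \<and> F x \<le> 1" "\<forall>x. 0 \<le> G x \<and> G x \<le> 1"
    unfolding F_def G_def by (auto simp: indicator_def)
  moreover have "\<forall>x. 0 \<le> (indicator (ball a r) x::real) \<and> (indicator (ball a r) x::real) \<le> 1"
    by (auto simp: indicator_def)
  ultimately show ?thesis unfolding nice_def by blast
qed

lemma TV_nice:
  assumes "nice \<psi>"
  shows "total_variation_on X \<psi> \<le> 2" "0 \<le> total_variation_on X \<psi>"
proof -
  obtain F G where FG: "mono F" "mono G" "\<And>x. 0 \<le> F x \<and> F x \<le> 1" "\<And>x. 0 \<le> G x \<and> G x \<le> 1"
     "\<And>x. \<psi> x = F x - G x"
    using assms unfolding nice_def by metis
  show "total_variation_on X \<psi> \<le> 2"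
    unfolding total_variation_on_def
  proof (rule SUP_least)
    fix xs :: "real list" assume xs: "xs \<in> {xs. sorted_wrt (<) xs \<and> set xs \<subseteq> X}"
    define n where "n = length xs - 1"
    have lt: "xs ! i \<le> xs ! Suc i" if "i < n" for i
      using xs that sorted_wrt_nth_less[of "(<)" xs i "Suc i"] unfolding n_def by fastforce
    have "(\<Sum>i<n. \<bar>\<psi> (xs ! Suc i) - \<psi> (xs ! i)\<bar>)
        \<le> (\<Sum>i<n. (F (xs ! Suc i) - F (xs ! i)) + (G (xs ! Suc i) - G (xs ! i)))"
    proof (rule sum_mono)
      fix i assume "i \<in> {..<n}"
      then have "F (xs ! i) \<le> F (xs ! Suc i)" "G (xs ! i) \<le> G (xs ! Suc i)"
        using lt FG(1,2) by (auto simp: mono_def)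
      then show "\<bar>\<psi> (xs ! Suc i) - \<psi> (xs ! i)\<bar> \<le> (F (xs ! Suc i) - F (xs ! i)) + (G (xs ! Suc i) - G (xs ! i))"
        using FG(5) by auto
    qed
    also have "\<dots> = (F (xs ! n) - F (xs ! 0)) + (G (xs ! n) - G (xs ! 0))"
      by (simp add: sum.distrib sum_lessThan_telescope[where f = "\<lambda>i. F (xs ! i)"]
            sum_lessThan_telescope[where f = "\<lambda>i. G (xs ! i)"])
    also have "\<dots> \<le> 2" using FG(3)[of "xs ! n"] FG(3)[of "xs ! 0"] FG(4)[of "xs ! n"] FG(4)[of "xs ! 0"]
      by linarith
    finally show "ereal (\<Sum>i<length xs - 1. \<bar>\<psi> (xs ! Suc i) - \<psi> (xs ! i)\<bar>) \<le> 2"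
      unfolding n_def by simp
  qed
  show "0 \<le> total_variation_on X \<psi>"
    unfolding total_variation_on_def
    by (rule SUP_upper2[of "[]"]) auto
qed

lemma BV_nice:
  assumes "nice \<psi>" "X \<noteq> {}"
  shows "bounded_variation_on X \<psi>" "0 \<le> BV_norm X \<psi>" "BV_norm X \<psi> \<le> 3"
proof -
  have b: "0 \<le> \<psi> x \<and> \<psi> x \<le> 1" for x using nice_bounds[OF assms(1)] .
  have tv: "total_variation_on X \<psi> \<le> 2" "0 \<le> total_variation_on X \<psi>" using TV_nice[OF assms(1)] by auto
  have bd: "bounded (\<psi> ` X)"
    unfolding bounded_iff using b by (auto intro!: exI[of _ 1])
  show "bounded_variation_on X \<psi>" unfolding bounded_variation_on_def using tv bd
    by (auto simp: order_le_less_trans)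
  have r: "0 \<le> real_of_ereal (total_variation_on X \<psi>) \<and> real_of_ereal (total_variation_on X \<psi>) \<le> 2"
    using tv by (cases "total_variation_on X \<psi>") auto
  have bdd: "bdd_above ((\<lambda>x. \<bar>\<psi> x\<bar>) ` X)" using b by (auto intro!: bdd_aboveI[of _ 1])
  have s1: "(SUP x\<in>X. \<bar>\<psi> x\<bar>) \<le> 1" using assms(2) b by (intro cSUP_least) auto
  obtain x0 where "x0 \<in> X" using assms(2) by auto
  have s0: "0 \<le> (SUP x\<in>X. \<bar>\<psi> x\<bar>)" using cSUP_upper[OF \<open>x0\<in>X\<close> bdd] by (meson abs_ge_zero order_trans)
  show "0 \<le> BV_norm X \<psi>" "BV_norm X \<psi> \<le> 3" unfolding BV_norm_def using r s0 s1 by auto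
qed


locale sys =
  fixes X :: "real set" and M :: "real measure" and T :: "real \<Rightarrow> real"
  assumes sp: "space M = X" and sts: "sets M = sets (restrict_space borel X)"
    and prob: "prob_space M" and mp: "measure_preserving_map M T"
begin

sublocale prob_space M by (rule prob)

lemma X_ne: "X \<noteq> {}" using not_empty sp by auto

lemma meas_borel: "f \<in> borel_measurable borel \<Longrightarrow> f \<in> borel_measurable M"
  by (subst measurable_cong_sets[OF sts refl]) (rule measurable_restrict_space1)

lemma id_meas[measurable]: "(\<lambda>x. x) \<in> borel_measurable M" by (rule meas_borel) simp

lemma sets_int: "A \<in> sets borel \<Longrightarrow> A \<inter> X \<in> sets M"
  using sts by (auto simp: sets_restrict_space)

lemma T_meas[measurable]: "T \<in> M \<rightarrow>\<^sub>M M" using mp unfolding measure_preserving_map_def by auto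

lemma Tn_meas[measurable]: "T ^^ n \<in> M \<rightarrow>\<^sub>M M"
proof (induct n)
  case 0 then show ?case by simp
next
  case (Suc n) then show ?case by (simp add: measurable_comp[OF Suc T_meas])
qed

lemma Tn_borel[measurable]: "T ^^ n \<in> borel_measurable M"
  using measurable_compose[OF Tn_meas id_meas] by simp

lemma distr_Tn: "distr M M (T ^^ n) = M"
proof (induct n)
  case 0 then show ?case by (simp add: distr_id2 sets_eq_imp_space_eq)
next
  case (Suc n)
  have "distr M M (T ^^ Suc n) = distr (distr M M (T ^^ n)) M T"
    by (simp add: distr_distr[OF T_meas Tn_meas])
  also have "\<dots> = M" using Suc mp unfolding measure_preserving_map_def by simp
  finally show ?case .
qed

lemma integral_Tn:
  fixes f :: "real \<Rightarrow> real"
  assumes "f \<in> borel_measurable M"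
  shows "(\<integral>x. f ((T ^^ n) x) \<partial>M) = integral\<^sup>L M f"
  using integral_distr[of "T^^n" M M f] Tn_meas assms distr_Tn by simp

lemma Tn_X: "x \<in> X \<Longrightarrow> (T ^^ n) x \<in> X"
  using measurable_space[OF Tn_meas] sp by auto

lemma nice_meas': "nice \<psi> \<Longrightarrow> \<psi> \<in> borel_measurable M"
  using meas_borel nice_meas by blast

lemma nice_integrable: "nice \<psi> \<Longrightarrow> integrable M \<psi>"
proof -
  assume n: "nice \<psi>"
  show ?thesis
    by (rule integrable_const_bound[where B=1]) (use nice_bounds[OF n] in \<open>auto intro!: AE_I2 simp: nice_meas'[OF n]\<close>)
qed

lemma nice_h: assumes "r > 0" shows "nice (\<lambda>y. measure M (ball y r \<inter> X))"
proof -
  define F where "F y = measure M ({..<y+r} \<inter> X)" for y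
  define G where "G y = measure M ({..y-r} \<inter> X)" for y
  have mF: "mono F" unfolding F_def mono_def
    by (auto intro!: finite_measure_mono sets_int)
  have mG: "mono G" unfolding G_def mono_def
    by (auto intro!: finite_measure_mono sets_int)
  have e: "ball y r \<inter> X = ({..<y+r} \<inter> X) - ({..y-r} \<inter> X)" for y
    by (auto simp: dist_real_def abs_less_iff)
  have eq: "\<forall>y. measure M (ball y r \<inter> X) = F y - G y"
    unfolding F_def G_def e using \<open>r > 0\<close>
    by (auto intro!: finite_measure_Diff sets_int)
  have bF: "\<forall>x. 0 \<le> F x \<and> F x \<le> 1" "\<forall>x. 0 \<le> G x \<and> G x \<le> 1"
    unfolding F_def G_def by auto
  have "\<forall>y. 0 \<le> measure M (ball y r \<inter> X) \<and> measure M (ball y r \<inter> X) \<le> 1" by auto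
  then show ?thesis unfolding nice_def using mF mG bF eq by blast
qed

lemma Linf_bound:
  assumes "\<phi> \<in> borel_measurable M" "\<And>x. \<bar>\<phi> x\<bar> \<le> 1"
  shows "in_Linf M \<phi>" "0 \<le> Linf_norm M \<phi>" "Linf_norm M \<phi> \<le> 1"
proof -
  have m: "(\<lambda>x. ereal \<bar>\<phi> x\<bar>) \<in> borel_measurable M" using assms(1) by measurable
  have le: "esssup M (\<lambda>x. ereal \<bar>\<phi> x\<bar>) \<le> 1"
    by (rule esssup_I[OF m]) (auto intro!: AE_I2 simp: assms(2))
  have "esssup M (\<lambda>x. ereal 0) \<le> esssup M (\<lambda>x. ereal \<bar>\<phi> x\<bar>)"
    by (rule esssup_mono) auto
  moreover have "esssup M (\<lambda>x. ereal 0) = 0"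
    by (subst esssup_const) (auto simp: emeasure_space_1)
  ultimately have ge: "0 \<le> esssup M (\<lambda>x. ereal \<bar>\<phi> x\<bar>)" by (simp add: zero_ereal_def)
  show "in_Linf M \<phi>" unfolding in_Linf_def using assms(1) le by (auto simp: order_le_less_trans)
  show "0 \<le> Linf_norm M \<phi>" "Linf_norm M \<phi> \<le> 1" unfolding Linf_norm_def using le ge
    by (cases "esssup M (\<lambda>x. ereal \<bar>\<phi> x\<bar>)"; auto)+
qed

lemma half_ball:
  assumes "r > 0"
  shows "measure M (ball b r \<inter> X) \<le> 2 * sqrt (\<integral>y. measure M (ball y r \<inter> X) \<partial>M)"
proof -
  define h where "h y = measure M (ball y r \<inter> X)" for y
  have hn: "nice h" unfolding h_def using nice_h[OF assms] .
  have key: "measure M (A \<inter> X) \<le> sqrt (integral\<^sup>L M h)" 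
    if A: "A \<in> sets borel" "\<And>y z. y \<in> A \<Longrightarrow> z \<in> A \<Longrightarrow> dist y z < r" for A
  proof -
    let ?L = "A \<inter> X"
    have L: "?L \<in> sets M" using sets_int[OF A(1)] .
    have "(measure M ?L)^2 = (\<integral>y. indicator ?L y * measure M ?L \<partial>M)"
      using L sp by (simp add: power2_eq_square Int_absorb2 sets.sets_into_space)
    also have "\<dots> \<le> (\<integral>y. h y \<partial>M)"
    proof (rule integral_mono)
      show "integrable M (\<lambda>y. indicator ?L y * measure M ?L)"
        using L by (intro integrable_mult_left integrable_const_bound[where B=1]) (auto intro!: AE_I2)
      show "integrable M h" using nice_integrable[OF hn] .
      fix y assume "y \<in> space M"
      show "indicator ?L y * measure M ?L \<le> h y"
      proof (cases "y \<in> ?L")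
        case True
        then have "?L \<subseteq> ball y r \<inter> X" using A(2) by (auto simp: ball_def)
        then have "measure M ?L \<le> h y" unfolding h_def
          by (intro finite_measure_mono sets_int) auto
        then show ?thesis using True by simp
      next
        case False then show ?thesis unfolding h_def by simp
      qed
    qed
    finally show ?thesis by (rule real_le_rsqrt)
  qed
  define L where "L = {b - r<..b}"
  define R where "R = {b<..<b + r}"
  have "ball b r \<inter> X \<subseteq> (L \<inter> X) \<union> (R \<inter> X)"
    unfolding L_def R_def by (auto simp: dist_real_def abs_less_iff)
  then have "measure M (ball b r \<inter> X) \<le> measure M ((L \<inter> X) \<union> (R \<inter> X))"
    by (intro finite_measure_mono) (auto intro!: sets_int simp: L_def R_def)
  also have "\<dots> \<le> measure M (L \<inter> X) + measure M (R \<inter> X)"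
    by (intro measure_subadditive) (auto intro!: sets_int simp: L_def R_def)
  also have "\<dots> \<le> sqrt (integral\<^sup>L M h) + sqrt (integral\<^sup>L M h)"
    by (intro add_mono key) (auto simp: L_def R_def dist_real_def)
  finally show ?thesis unfolding h_def by simp
qed

lemma mix_one_sided:
  assumes mix: "exp_mixing_BV_Linf X M T"
  shows "\<exists>C \<theta>. C > 0 \<and> \<theta> > 0 \<and> (\<forall>\<psi> \<phi> i k g. nice \<psi> \<longrightarrow> nice \<phi> \<longrightarrow> i + g \<le> k \<longrightarrow>
     \<bar>(\<integral>x. \<psi> ((T^^i) x) * \<phi> ((T^^k) x) \<partial>M) - integral\<^sup>L M \<psi> * integral\<^sup>L M \<phi>\<bar> \<le> 3 * C * exp (- \<theta> * real g))"
proof -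
  obtain C \<theta> where C: "C > 0" "\<theta> > 0" and mx: "\<And>\<psi> \<phi> (n::nat). \<psi> \<in> borel_measurable M \<Longrightarrow> bounded_variation_on X \<psi> \<Longrightarrow> in_Linf M \<phi> \<Longrightarrow>
          \<bar>(\<integral>x. \<psi> x * \<phi> ((T ^^ n) x) \<partial>M) - (\<integral>x. \<psi> x \<partial>M) * (\<integral>x. \<phi> x \<partial>M)\<bar>
            \<le> C * BV_norm X \<psi> * Linf_norm M \<phi> * exp (- \<theta> * real n)"
    using mix unfolding exp_mixing_BV_Linf_def by blast
  have main: "\<bar>(\<integral>x. \<psi> ((T^^i) x) * \<phi> ((T^^k) x) \<partial>M) - integral\<^sup>L M \<psi> * integral\<^sup>L M \<phi>\<bar> \<le> 3 * C * exp (- \<theta> * real g)"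
    if n: "nice \<psi>" "nice \<phi>" "i + g \<le> k" for \<psi> \<phi> i k g
  proof -
    define n where "n = k - i"
    have k: "k = n + i" using n(3) unfolding n_def by simp
    have m\<psi>: "\<psi> \<in> borel_measurable M" and m\<phi>: "\<phi> \<in> borel_measurable M" using n nice_meas' by auto
    have "(\<integral>x. \<psi> ((T^^i) x) * \<phi> ((T^^k) x) \<partial>M) = (\<integral>x. (\<lambda>z. \<psi> z * \<phi> ((T^^n) z)) ((T^^i) x) \<partial>M)"
      unfolding k funpow_add by simp
    also have "\<dots> = (\<integral>z. \<psi> z * \<phi> ((T^^n) z) \<partial>M)"
      by (rule integral_Tn) (use m\<psi> m\<phi> in measurable)
    finally have eq: "(\<integral>x. \<psi> ((T^^i) x) * \<phi> ((T^^k) x) \<partial>M) = (\<integral>z. \<psi> z * \<phi> ((T^^n) z) \<partial>M)" .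
    have bv: "bounded_variation_on X \<psi>" "0 \<le> BV_norm X \<psi>" "BV_norm X \<psi> \<le> 3"
      using BV_nice[OF n(1) X_ne] by auto
    have li: "in_Linf M \<phi>" "0 \<le> Linf_norm M \<phi>" "Linf_norm M \<phi> \<le> 1"
      using Linf_bound[OF m\<phi>] nice_bounds[OF n(2)] by (auto simp: abs_le_iff)
    have "\<bar>(\<integral>z. \<psi> z * \<phi> ((T^^n) z) \<partial>M) - integral\<^sup>L M \<psi> * integral\<^sup>L M \<phi>\<bar>
        \<le> C * BV_norm X \<psi> * Linf_norm M \<phi> * exp (- \<theta> * real n)"
      using mx[OF m\<psi> bv(1) li(1)] by simp
    also have "\<dots> \<le> C * 3 * 1 * exp (- \<theta> * real g)"
    proof (intro mult_mono)
      show "exp (- \<theta> * real n) \<le> exp (- \<theta> * real g)" using n(3) C(2) unfolding n_def by simp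
    qed (use C bv li in auto)
    finally show ?thesis unfolding eq by simp
  qed
  show ?thesis using C main by blast
qed

lemma mix_two_sided:
  assumes mix: "exp_mixing_BV_Linf X M T"
  shows "\<exists>C \<theta>. C > 0 \<and> \<theta> > 0 \<and> (\<forall>\<psi> \<phi> i k g. nice \<psi> \<longrightarrow> nice \<phi> \<longrightarrow> (i + g \<le> k \<or> k + g \<le> i) \<longrightarrow>
     \<bar>(\<integral>x. \<psi> ((T^^i) x) * \<phi> ((T^^k) x) \<partial>M) - integral\<^sup>L M \<psi> * integral\<^sup>L M \<phi>\<bar> \<le> 3 * C * exp (- \<theta> * real g))"
proof -
  obtain C \<theta> where C: "C > 0" "\<theta> > 0" and mx: "\<And>\<psi> \<phi> i k g. nice \<psi> \<Longrightarrow> nice \<phi> \<Longrightarrow> i + g \<le> k \<Longrightarrow>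
     \<bar>(\<integral>x. \<psi> ((T^^i) x) * \<phi> ((T^^k) x) \<partial>M) - integral\<^sup>L M \<psi> * integral\<^sup>L M \<phi>\<bar> \<le> 3 * C * exp (- \<theta> * real g)"
    using mix_one_sided[OF mix] by blast
  have "\<bar>(\<integral>x. \<psi> ((T^^i) x) * \<phi> ((T^^k) x) \<partial>M) - integral\<^sup>L M \<psi> * integral\<^sup>L M \<phi>\<bar> \<le> 3 * C * exp (- \<theta> * real g)"
    if "nice \<psi>" "nice \<phi>" "i + g \<le> k \<or> k + g \<le> i" for \<psi> \<phi> i k g
    using that(3)
  proof
    assume "i + g \<le> k" then show ?thesis using mx that(1,2) by blast
  next
    assume "k + g \<le> i"
    then have "\<bar>(\<integral>x. \<phi> ((T^^k) x) * \<psi> ((T^^i) x) \<partial>M) - integral\<^sup>L M \<phi> * integral\<^sup>L M \<psi>\<bar> \<le> 3 * C * exp (- \<theta> * real g)"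
      using mx that(1,2) by blast
    then show ?thesis by (simp add: mult.commute)
  qed
  then show ?thesis using C by blast
qed

end


locale two = S1: sys X M1 T1 + S2: sys X M2 T2 for X M1 T1 M2 T2 +
  fixes \<rho> :: real and C1 \<theta>1 C2 \<theta>2 :: real
  assumes rho: "\<rho> > 0" and Cpos: "C1 > 0" "C2 > 0"
  and mix1: "\<And>\<psi> \<phi> i k g. nice \<psi> \<Longrightarrow> nice \<phi> \<Longrightarrow> (i + g \<le> k \<or> k + g \<le> i) \<Longrightarrow>
     \<bar>(\<integral>x. \<psi> ((T1^^i) x) * \<phi> ((T1^^k) x) \<partial>M1) - integral\<^sup>L M1 \<psi> * integral\<^sup>L M1 \<phi>\<bar> \<le> 3 * C1 * exp (- \<theta>1 * real g)"
  and mix2: "\<And>\<psi> \<phi> i k g. nice \<psi> \<Longrightarrow> nice \<phi> \<Longrightarrow> (i + g \<le> k \<or> k + g \<le> i) \<Longrightarrow>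
     \<bar>(\<integral>x. \<psi> ((T2^^i) x) * \<phi> ((T2^^k) x) \<partial>M2) - integral\<^sup>L M2 \<psi> * integral\<^sup>L M2 \<phi>\<bar> \<le> 3 * C2 * exp (- \<theta>2 * real g)"
begin

sublocale P: pair_prob_space M1 M2 ..

definition F :: "real \<Rightarrow> real \<Rightarrow> real" where "F u v = (if dist u v < \<rho> then 1 else 0)"

lemma F_ind: "F u = indicator (ball u \<rho>)" by (auto simp: F_def indicator_def)
lemma F_sym: "F u v = F v u" by (simp add: F_def dist_commute)
lemma F_bounds: "0 \<le> F u v" "F u v \<le> 1" by (auto simp: F_def)

lemma F_meas[measurable]: "(\<lambda>(u,v). F u v) \<in> borel_measurable (borel \<Otimes>\<^sub>M borel)"
  unfolding F_def by measurable

lemma F_meas2[measurable]: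
  assumes [measurable]: "a \<in> borel_measurable N" "b \<in> borel_measurable N"
  shows "(\<lambda>z. F (a z) (b z)) \<in> borel_measurable N"
  unfolding F_def by measurable

definition h1 where "h1 y = measure M1 (ball y \<rho> \<inter> X)"
definition h2 where "h2 x = measure M2 (ball x \<rho> \<inter> X)"
definition I where "I = (\<integral>y. h1 y \<partial>M2)"
definition J1 where "J1 = (\<integral>y. h1 y \<partial>M1)"
definition J2 where "J2 = (\<integral>y. h2 y \<partial>M2)"

lemma nice_h1: "nice h1" unfolding h1_def using S1.nice_h[OF rho] .
lemma nice_h2: "nice h2" unfolding h2_def using S2.nice_h[OF rho] .
lemma nice_F: "nice (F u)" unfolding F_ind using nice_indicator_ball[OF rho] .

lemma h1_meas[measurable]: "h1 \<in> borel_measurable borel" using nice_meas[OF nice_h1] .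
lemma h2_meas[measurable]: "h2 \<in> borel_measurable borel" using nice_meas[OF nice_h2] .

lemma h1_bounds: "0 \<le> h1 y" "h1 y \<le> 1" using nice_bounds[OF nice_h1] by auto
lemma h2_bounds: "0 \<le> h2 y" "h2 y \<le> 1" using nice_bounds[OF nice_h2] by auto

lemma h1_sup: "h1 y \<le> 2 * sqrt J1" unfolding h1_def J1_def using S1.half_ball[OF rho] by (simp add: h1_def)
lemma h2_sup: "h2 y \<le> 2 * sqrt J2" unfolding h2_def J2_def using S2.half_ball[OF rho] by (simp add: h2_def)

lemma int_F1: "(\<integral>x. F x c \<partial>M1) = h1 c"
proof -
  have e: "\<And>x. F x c = indicator (ball c \<rho>) x" by (simp add: F_def indicator_def dist_commute)
  have "(\<integral>x. F x c \<partial>M1) = (\<integral>x. indicator (ball c \<rho>) x \<partial>M1)" by (simp only: e)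
  also have "\<dots> = h1 c" unfolding h1_def by (simp add: S1.sp Int_commute)
  finally show ?thesis .
qed

lemma int_F2: "(\<integral>y. F c y \<partial>M2) = h2 c"
proof -
  have "(\<integral>y. F c y \<partial>M2) = (\<integral>x. indicator (ball c \<rho>) x \<partial>M2)" by (simp add: F_ind)
  also have "\<dots> = h2 c" unfolding h2_def by (simp add: S2.sp Int_commute)
  finally show ?thesis .
qed

lemma bounded_integrable_P:
  fixes G :: "real \<times> real \<Rightarrow> real" and B :: real
  assumes "G \<in> borel_measurable (M1 \<Otimes>\<^sub>M M2)" "\<And>z. \<bar>G z\<bar> \<le> B"
  shows "integrable (M1 \<Otimes>\<^sub>M M2) G"
  by (rule P.integrable_const_bound[where B=B]) (use assms in auto)

definition f :: "nat \<Rightarrow> nat \<Rightarrow> real \<times> real \<Rightarrow> real" where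
  "f i j z = F ((T1^^i) (fst z)) ((T2^^j) (snd z))"

lemma f_meas[measurable]: "f i j \<in> borel_measurable (M1 \<Otimes>\<^sub>M M2)"
  unfolding f_def by measurable

lemma f_bounds: "0 \<le> f i j z" "f i j z \<le> 1" unfolding f_def using F_bounds by auto

lemma I_alt: "I = (\<integral>x. h2 x \<partial>M1)"
proof -
  have int: "integrable (M1 \<Otimes>\<^sub>M M2) (\<lambda>(x,y). F x y)"
    by (rule bounded_integrable_P[where B=1]) (auto simp: F_def)
  have "I = (\<integral>y. (\<integral>x. F x y \<partial>M1) \<partial>M2)" unfolding I_def int_F1 ..
  also have "\<dots> = (\<integral>x. (\<integral>y. F x y \<partial>M2) \<partial>M1)" using P.Fubini_integral[OF int] .
  also have "\<dots> = (\<integral>x. h2 x \<partial>M1)" unfolding int_F2 ..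
  finally show ?thesis .
qed

lemma E_f: "(\<integral>z. f i j z \<partial>(M1 \<Otimes>\<^sub>M M2)) = I"
proof -
  have int: "integrable (M1 \<Otimes>\<^sub>M M2) (\<lambda>(x,y). F ((T1^^i) x) ((T2^^j) y))"
    by (rule bounded_integrable_P[where B=1]) (auto simp: F_def)
  have "(\<integral>z. f i j z \<partial>(M1 \<Otimes>\<^sub>M M2)) = (\<integral>z. (\<lambda>(x,y). F ((T1^^i) x) ((T2^^j) y)) z \<partial>(M1 \<Otimes>\<^sub>M M2))"
    unfolding f_def by (simp add: case_prod_beta)
  also have "\<dots> = (\<integral>y. (\<integral>x. F ((T1^^i) x) ((T2^^j) y) \<partial>M1) \<partial>M2)"
    using P.integral_snd[OF int] by simp
  also have "\<dots> = (\<integral>y. h1 ((T2^^j) y) \<partial>M2)"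
  proof (rule Bochner_Integration.integral_cong[OF refl])
    fix y
    have "(\<integral>x. F ((T1^^i) x) ((T2^^j) y) \<partial>M1) = (\<integral>x. F x ((T2^^j) y) \<partial>M1)"
      by (rule S1.integral_Tn) measurable
    then show "(\<integral>x. F ((T1^^i) x) ((T2^^j) y) \<partial>M1) = h1 ((T2^^j) y)" using int_F1 by simp
  qed
  also have "\<dots> = I" unfolding I_def by (rule S2.integral_Tn) (rule S2.meas_borel, measurable)
  finally show ?thesis .
qed


lemma int_M1:
  fixes G :: "real \<Rightarrow> real" and B :: real
  assumes "G \<in> borel_measurable M1" "\<And>z. \<bar>G z\<bar> \<le> B"
  shows "integrable M1 G"
  by (rule S1.integrable_const_bound[where B=B]) (use assms in auto)

lemma int_M2:
  fixes G :: "real \<Rightarrow> real" and B :: real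
  assumes "G \<in> borel_measurable M2" "\<And>z. \<bar>G z\<bar> \<le> B"
  shows "integrable M2 G"
  by (rule S2.integrable_const_bound[where B=B]) (use assms in auto)

definition quad where "quad i j k l = (\<integral>z. f i j z * f k l z \<partial>(M1 \<Otimes>\<^sub>M M2))"
definition E1 where "E1 g = 3 * C1 * exp (- \<theta>1 * real g)"
definition E2 where "E2 g = 3 * C2 * exp (- \<theta>2 * real g)"

lemma E_nonneg: "0 \<le> E1 g" "0 \<le> E2 g" unfolding E1_def E2_def using Cpos by auto

lemma I_nonneg: "0 \<le> I" unfolding I_def using h1_bounds by simp
lemma J_nonneg: "0 \<le> J1" "0 \<le> J2" unfolding J1_def J2_def using h1_bounds h2_bounds by simp_all

lemma quad_int: "integrable (M1 \<Otimes>\<^sub>M M2) (\<lambda>(x,y). F ((T1^^i) x) ((T2^^j) y) * F ((T1^^k) x) ((T2^^l) y))"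
  by (rule bounded_integrable_P[where B=1]) (auto simp: F_def)

lemma quad_y: "quad i j k l = (\<integral>y. (\<integral>x. F ((T1^^i) x) ((T2^^j) y) * F ((T1^^k) x) ((T2^^l) y) \<partial>M1) \<partial>M2)"
  unfolding quad_def f_def using P.integral_snd[OF quad_int] unfolding case_prod_beta' by simp

lemma quad_x: "quad i j k l = (\<integral>x. (\<integral>y. F ((T1^^i) x) ((T2^^j) y) * F ((T1^^k) x) ((T2^^l) y) \<partial>M2) \<partial>M1)"
  unfolding quad_def f_def using P.integral_fst[OF quad_int] unfolding case_prod_beta' by simp

lemma quad_A: "quad i j k l \<le> I"
proof -
  have "quad i j k l \<le> (\<integral>z. f i j z \<partial>(M1 \<Otimes>\<^sub>M M2))"
    unfolding quad_def
  proof (rule integral_mono)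
    show "integrable (M1 \<Otimes>\<^sub>M M2) (\<lambda>z. f i j z * f k l z)"
      by (rule bounded_integrable_P[where B=1]) (auto simp: f_def F_def)
    show "integrable (M1 \<Otimes>\<^sub>M M2) (f i j)"
      by (rule bounded_integrable_P[where B=1]) (auto simp: f_def F_def)
    fix z show "f i j z * f k l z \<le> f i j z" using f_bounds[of i j z] f_bounds[of k l z]
      by (simp add: mult_left_le)
  qed
  then show ?thesis using E_f by simp
qed

lemma inner_x:
  assumes "i + g \<le> k \<or> k + g \<le> i"
  shows "(\<integral>x. F ((T1^^i) x) a * F ((T1^^k) x) b \<partial>M1) \<le> h1 a * h1 b + E1 g"
proof -
  have Fs: "F c = (\<lambda>x. F x c)" for c by (rule ext) (simp add: F_sym)
  have ia: "integral\<^sup>L M1 (F a) = h1 a" using int_F1[of a] by (subst Fs) simp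
  have ib: "integral\<^sup>L M1 (F b) = h1 b" using int_F1[of b] by (subst Fs) simp
  have "\<bar>(\<integral>x. F a ((T1^^i) x) * F b ((T1^^k) x) \<partial>M1) - integral\<^sup>L M1 (F a) * integral\<^sup>L M1 (F b)\<bar> \<le> E1 g"
    unfolding E1_def by (rule mix1[OF nice_F nice_F assms])
  then show ?thesis unfolding ia ib by (simp add: F_sym abs_le_iff)
qed

lemma inner_y:
  assumes "j + g \<le> l \<or> l + g \<le> j"
  shows "(\<integral>y. F a ((T2^^j) y) * F b ((T2^^l) y) \<partial>M2) \<le> h2 a * h2 b + E2 g"
proof -
  have "\<bar>(\<integral>y. F a ((T2^^j) y) * F b ((T2^^l) y) \<partial>M2) - integral\<^sup>L M2 (F a) * integral\<^sup>L M2 (F b)\<bar> \<le> E2 g"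
    unfolding E2_def by (rule mix2[OF nice_F nice_F assms])
  then show ?thesis using int_F2[of a] int_F2[of b] by (simp add: abs_le_iff)
qed

lemma quad_y_bound:
  assumes "i + g \<le> k \<or> k + g \<le> i"
  shows "quad i j k l \<le> (\<integral>y. h1 ((T2^^j) y) * h1 ((T2^^l) y) \<partial>M2) + E1 g"
proof -
  have "quad i j k l \<le> (\<integral>y. h1 ((T2^^j) y) * h1 ((T2^^l) y) + E1 g \<partial>M2)"
    unfolding quad_y
  proof (rule integral_mono)
    show "integrable M2 (\<lambda>y. \<integral>x. F ((T1 ^^ i) x) ((T2 ^^ j) y) * F ((T1 ^^ k) x) ((T2 ^^ l) y) \<partial>M1)"
      using P.integrable_snd[OF quad_int] by simp
    show "integrable M2 (\<lambda>y. h1 ((T2 ^^ j) y) * h1 ((T2 ^^ l) y) + E1 g)"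
      by (rule int_M2[where B="1 + E1 g"], measurable, use h1_bounds E_nonneg in \<open>auto simp: abs_le_iff mult_le_one\<close>)
  qed (rule inner_x[OF assms])
  also have "\<dots> = (\<integral>y. h1 ((T2^^j) y) * h1 ((T2^^l) y) \<partial>M2) + E1 g"
  proof -
    have "integrable M2 (\<lambda>y. h1 ((T2^^j) y) * h1 ((T2^^l) y))"
      by (rule int_M2[where B=1], measurable, auto simp: abs_le_iff mult_le_one h1_bounds)
    then show ?thesis by (subst Bochner_Integration.integral_add) (auto simp: S2.prob_space)
  qed
  finally show ?thesis .
qed

lemma quad_x_bound:
  assumes "j + g \<le> l \<or> l + g \<le> j"
  shows "quad i j k l \<le> (\<integral>x. h2 ((T1^^i) x) * h2 ((T1^^k) x) \<partial>M1) + E2 g"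
proof -
  have "quad i j k l \<le> (\<integral>x. h2 ((T1^^i) x) * h2 ((T1^^k) x) + E2 g \<partial>M1)"
    unfolding quad_x
  proof (rule integral_mono)
    show "integrable M1 (\<lambda>x. \<integral>y. F ((T1 ^^ i) x) ((T2 ^^ j) y) * F ((T1 ^^ k) x) ((T2 ^^ l) y) \<partial>M2)"
      using P.integrable_fst[OF quad_int] by simp
    show "integrable M1 (\<lambda>x. h2 ((T1 ^^ i) x) * h2 ((T1 ^^ k) x) + E2 g)"
      by (rule int_M1[where B="1 + E2 g"], measurable, use h2_bounds E_nonneg in \<open>auto simp: abs_le_iff mult_le_one\<close>)
    fix x
    show "(\<integral>y. F ((T1 ^^ i) x) ((T2 ^^ j) y) * F ((T1 ^^ k) x) ((T2 ^^ l) y) \<partial>M2) \<le> h2 ((T1 ^^ i) x) * h2 ((T1 ^^ k) x) + E2 g"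
      by (rule inner_y[OF assms])
  qed
  also have "\<dots> = (\<integral>x. h2 ((T1^^i) x) * h2 ((T1^^k) x) \<partial>M1) + E2 g"
  proof -
    have "integrable M1 (\<lambda>y. h2 ((T1^^i) y) * h2 ((T1^^k) y))"
      by (rule int_M1[where B=1], measurable, auto simp: abs_le_iff mult_le_one h2_bounds)
    then show ?thesis by (subst Bochner_Integration.integral_add) (auto simp: S1.prob_space)
  qed
  finally show ?thesis .
qed


lemma int_h1T: "(\<integral>y. h1 ((T2^^j) y) \<partial>M2) = I"
  unfolding I_def by (rule S2.integral_Tn) (rule S2.meas_borel, measurable)

lemma int_h2T: "(\<integral>x. h2 ((T1^^i) x) \<partial>M1) = I"
  unfolding I_alt by (rule S1.integral_Tn) (rule S1.meas_borel, measurable)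

lemma prod_h1_le: "(\<integral>y. h1 ((T2^^j) y) * h1 ((T2^^l) y) \<partial>M2) \<le> 2 * sqrt J1 * I"
proof -
  have "(\<integral>y. h1 ((T2^^j) y) * h1 ((T2^^l) y) \<partial>M2) \<le> (\<integral>y. h1 ((T2^^j) y) * (2 * sqrt J1) \<partial>M2)"
  proof (rule integral_mono)
    show "integrable M2 (\<lambda>y. h1 ((T2^^j) y) * h1 ((T2^^l) y))"
      by (rule int_M2[where B=1], measurable, auto simp: abs_le_iff mult_le_one h1_bounds)
    show "integrable M2 (\<lambda>y. h1 ((T2^^j) y) * (2 * sqrt J1))"
      by (rule int_M2[where B="2 * sqrt J1"], measurable, use h1_bounds J_nonneg in \<open>auto simp: abs_mult mult_left_le_one_le\<close>)
    fix y show "h1 ((T2^^j) y) * h1 ((T2^^l) y) \<le> h1 ((T2^^j) y) * (2 * sqrt J1)"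
      by (rule mult_left_mono[OF h1_sup h1_bounds(1)])
  qed
  also have "\<dots> = 2 * sqrt J1 * I" using int_h1T[of j] by simp
  finally show ?thesis .
qed

lemma prod_h2_le: "(\<integral>x. h2 ((T1^^i) x) * h2 ((T1^^k) x) \<partial>M1) \<le> 2 * sqrt J2 * I"
proof -
  have "(\<integral>x. h2 ((T1^^i) x) * h2 ((T1^^k) x) \<partial>M1) \<le> (\<integral>x. h2 ((T1^^i) x) * (2 * sqrt J2) \<partial>M1)"
  proof (rule integral_mono)
    show "integrable M1 (\<lambda>x. h2 ((T1^^i) x) * h2 ((T1^^k) x))"
      by (rule int_M1[where B=1], measurable, auto simp: abs_le_iff mult_le_one h2_bounds)
    show "integrable M1 (\<lambda>x. h2 ((T1^^i) x) * (2 * sqrt J2))"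
      by (rule int_M1[where B="2 * sqrt J2"], measurable, use h2_bounds J_nonneg in \<open>auto simp: abs_mult mult_left_le_one_le\<close>)
    fix x show "h2 ((T1^^i) x) * h2 ((T1^^k) x) \<le> h2 ((T1^^i) x) * (2 * sqrt J2)"
      by (rule mult_left_mono[OF h2_sup h2_bounds(1)])
  qed
  also have "\<dots> = 2 * sqrt J2 * I" using int_h2T[of i] by simp
  finally show ?thesis .
qed

lemma prod_h1_mix:
  assumes "j + g \<le> l \<or> l + g \<le> j"
  shows "(\<integral>y. h1 ((T2^^j) y) * h1 ((T2^^l) y) \<partial>M2) \<le> I * I + E2 g"
  using mix2[OF nice_h1 nice_h1 assms] unfolding E2_def I_def by (simp add: abs_le_iff)

definition cl :: "nat \<Rightarrow> nat \<Rightarrow> nat \<Rightarrow> real" where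
  "cl g i k = (if i < k + g \<and> k < i + g then 1 else 0)"

definition bq where "bq g i j k l = cl g i k * cl g j l * I + cl g i k * (2 * sqrt J2 * I + E2 g)
   + cl g j l * (2 * sqrt J1 * I + E1 g) + (E1 g + E2 g)"

lemma quad_total: "quad i j k l \<le> I * I + bq g i j k l"
proof -
  have A1: "0 \<le> 2 * sqrt J2 * I + E2 g" "0 \<le> 2 * sqrt J1 * I + E1 g" "0 \<le> E1 g + E2 g"
    using I_nonneg J_nonneg E_nonneg by auto
  have I2: "0 \<le> I * I" using I_nonneg by simp
  show ?thesis
  proof (cases "i < k + g \<and> k < i + g")
    case c1: True
    show ?thesis
    proof (cases "j < l + g \<and> l < j + g")
      case True
      then have "bq g i j k l = I + (2 * sqrt J2 * I + E2 g) + (2 * sqrt J1 * I + E1 g) + (E1 g + E2 g)"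
        using c1 unfolding bq_def cl_def by simp
      then show ?thesis using quad_A[of i j k l] A1 I2 by linarith
    next
      case False
      then have "j + g \<le> l \<or> l + g \<le> j" by auto
      from quad_x_bound[OF this, of i k] prod_h2_le[of i k]
      have q: "quad i j k l \<le> 2 * sqrt J2 * I + E2 g" by linarith
      have "bq g i j k l = (2 * sqrt J2 * I + E2 g) + (E1 g + E2 g)"
        using c1 False unfolding bq_def cl_def by auto
      then show ?thesis using q A1 I2 by linarith
    qed
  next
    case c1: False
    then have far1: "i + g \<le> k \<or> k + g \<le> i" by auto
    show ?thesis
    proof (cases "j < l + g \<and> l < j + g")
      case True
      from quad_y_bound[OF far1, of j l] prod_h1_le[of j l]
      have q: "quad i j k l \<le> 2 * sqrt J1 * I + E1 g" by linarith
      have "bq g i j k l = (2 * sqrt J1 * I + E1 g) + (E1 g + E2 g)"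
        using c1 True unfolding bq_def cl_def by auto
      then show ?thesis using q A1 I2 by linarith
    next
      case False
      then have "j + g \<le> l \<or> l + g \<le> j" by auto
      from quad_y_bound[OF far1, of j l] prod_h1_mix[OF this]
      have q: "quad i j k l \<le> I * I + E2 g + E1 g" by linarith
      have "bq g i j k l = (E1 g + E2 g)"
        using c1 False unfolding bq_def cl_def by auto
      then show ?thesis using q A1 I2 by linarith
    qed
  qed
qed

end


lemma four_sum:
  fixes a b :: "nat \<Rightarrow> nat \<Rightarrow> real"
  shows "(\<Sum>i<m. \<Sum>j<m. \<Sum>k<m. \<Sum>l<m. a i k * b j l) = (\<Sum>i<m. \<Sum>k<m. a i k) * (\<Sum>j<m. \<Sum>l<m. b j l)"
proof -
  have "(\<Sum>i<m. \<Sum>j<m. \<Sum>k<m. \<Sum>l<m. a i k * b j l) = (\<Sum>i<m. \<Sum>k<m. \<Sum>j<m. \<Sum>l<m. a i k * b j l)"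
    by (intro sum.cong refl sum.swap)
  also have "\<dots> = (\<Sum>i<m. \<Sum>k<m. a i k * (\<Sum>j<m. \<Sum>l<m. b j l))"
    by (simp add: sum_distrib_left)
  also have "\<dots> = (\<Sum>i<m. \<Sum>k<m. a i k) * (\<Sum>j<m. \<Sum>l<m. b j l)"
    by (simp add: sum_distrib_right)
  finally show ?thesis .
qed

context two
begin

lemma cl_bounds: "0 \<le> cl g i k" "cl g i k \<le> 1" by (auto simp: cl_def)

lemma count_row: "(\<Sum>k<m. cl g i k) \<le> 2 * real g"
proof -
  have "(\<Sum>k<m. cl g i k) \<le> (\<Sum>k\<in>{..<m} \<union> {i-g..<i+g}. cl g i k)"
    by (rule sum_mono2) (auto simp: cl_def)
  also have "\<dots> = (\<Sum>k\<in>{i-g..<i+g}. cl g i k)"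
    by (rule sum.mono_neutral_right) (auto simp: cl_def)
  also have "\<dots> \<le> (\<Sum>k\<in>{i-g..<i+g}. 1)"
    by (rule sum_mono) (auto simp: cl_def)
  also have "\<dots> \<le> 2 * real g" by simp
  finally show ?thesis .
qed

lemma count_all: "(\<Sum>i<m. \<Sum>k<m. cl g i k) \<le> 2 * real g * real m"
proof -
  have "(\<Sum>i<m. \<Sum>k<m. cl g i k) \<le> (\<Sum>i<m. 2 * real g)" by (rule sum_mono) (rule count_row)
  then show ?thesis by (simp add: mult.commute)
qed

lemma count_all2: "(\<Sum>i<m. \<Sum>k<m. cl g i k) \<le> real m * real m"
proof -
  have "(\<Sum>i<m. \<Sum>k<m. cl g i k) \<le> (\<Sum>i<m. \<Sum>k<m. 1)" by (intro sum_mono) (auto simp: cl_def)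
  then show ?thesis by simp
qed

lemma count_nonneg: "0 \<le> (\<Sum>i<m. \<Sum>k<m. cl g i k)" by (intro sum_nonneg) (auto simp: cl_def)

lemma sum_bq: "(\<Sum>i<m. \<Sum>j<m. \<Sum>k<m. \<Sum>l<m. bq g i j k l)
   \<le> 4 * real g ^ 2 * real m ^ 2 * I + 4 * real g * real m ^ 3 * (sqrt J1 + sqrt J2) * I
     + 2 * real m ^ 4 * (E1 g + E2 g)"
proof -
  define c where "c = (\<Sum>i<m. \<Sum>k<m. cl g i k)"
  define \<beta>1 where "\<beta>1 = 2 * sqrt J1 * I + E1 g"
  define \<beta>2 where "\<beta>2 = 2 * sqrt J2 * I + E2 g"
  define \<gamma> where "\<gamma> = E1 g + E2 g"
  have mm: "(\<Sum>j<m. \<Sum>l<m. (1::real)) = real m * real m" by simp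
  have bq_eq: "bq g i j k l = (cl g i k * I) * cl g j l + (cl g i k * \<beta>2) * 1 + \<beta>1 * cl g j l + \<gamma> * 1"
    for i j k l unfolding bq_def \<beta>1_def \<beta>2_def \<gamma>_def by (simp add: algebra_simps)
  have "(\<Sum>i<m. \<Sum>j<m. \<Sum>k<m. \<Sum>l<m. bq g i j k l)
      = (\<Sum>i<m. \<Sum>j<m. \<Sum>k<m. \<Sum>l<m. (cl g i k * I) * cl g j l)
      + (\<Sum>i<m. \<Sum>j<m. \<Sum>k<m. \<Sum>l<m. (cl g i k * \<beta>2) * 1)
      + (\<Sum>i<m. \<Sum>j<m. \<Sum>k<m. \<Sum>l<m. \<beta>1 * cl g j l)
      + (\<Sum>i<m. \<Sum>j<m. \<Sum>k<m. \<Sum>l<m. \<gamma> * 1)"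
    unfolding bq_eq by (simp add: sum.distrib)
  also have "\<dots> = (c * I) * c + (c * \<beta>2) * (real m * real m) + (\<beta>1 * (real m * real m)) * c
      + (\<gamma> * (real m * real m)) * (real m * real m)"
    unfolding four_sum c_def by (simp add: sum_distrib_left sum_distrib_right mult_ac)
  finally have eq: "(\<Sum>i<m. \<Sum>j<m. \<Sum>k<m. \<Sum>l<m. bq g i j k l) = \<dots>" .
  have c0: "0 \<le> c" and c1: "c \<le> 2 * real g * real m" and c2: "c \<le> real m * real m"
    unfolding c_def using count_nonneg count_all count_all2 by auto
  have I0: "0 \<le> I" using I_nonneg .
  have sJ: "0 \<le> sqrt J1" "0 \<le> sqrt J2" using J_nonneg by auto
  have En: "0 \<le> E1 g" "0 \<le> E2 g" using E_nonneg by auto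
  have t1: "(c * I) * c \<le> 4 * real g ^ 2 * real m ^ 2 * I"
  proof -
    have "c * c \<le> (2 * real g * real m) * (2 * real g * real m)" using c0 c1 by (intro mult_mono) auto
    then have "(c * c) * I \<le> ((2 * real g * real m) * (2 * real g * real m)) * I" using I0 by (rule mult_right_mono)
    then show ?thesis by (simp add: power2_eq_square algebra_simps)
  qed
  have t2: "(c * \<beta>2) * (real m * real m) \<le> 4 * real g * real m ^ 3 * sqrt J2 * I + real m ^ 4 * E2 g"
  proof -
    have a: "c * (2 * sqrt J2 * I) \<le> (2 * real g * real m) * (2 * sqrt J2 * I)"
      using c1 sJ I0 by (intro mult_right_mono) auto
    have b: "c * E2 g \<le> (real m * real m) * E2 g" using c2 En by (intro mult_right_mono) auto
    have "c * \<beta>2 \<le> (2 * real g * real m) * (2 * sqrt J2 * I) + (real m * real m) * E2 g"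
      unfolding \<beta>2_def using a b by (simp add: distrib_left)
    then have "(c * \<beta>2) * (real m * real m) \<le> ((2 * real g * real m) * (2 * sqrt J2 * I) + (real m * real m) * E2 g) * (real m * real m)"
      by (rule mult_right_mono) simp
    then show ?thesis by (simp add: power2_eq_square power3_eq_cube algebra_simps power4_eq_xxxx)
  qed
  have t3: "(\<beta>1 * (real m * real m)) * c \<le> 4 * real g * real m ^ 3 * sqrt J1 * I + real m ^ 4 * E1 g"
  proof -
    have a: "c * (2 * sqrt J1 * I) \<le> (2 * real g * real m) * (2 * sqrt J1 * I)"
      using c1 sJ I0 by (intro mult_right_mono) auto
    have b: "c * E1 g \<le> (real m * real m) * E1 g" using c2 En by (intro mult_right_mono) auto
    have "c * \<beta>1 \<le> (2 * real g * real m) * (2 * sqrt J1 * I) + (real m * real m) * E1 g"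
      unfolding \<beta>1_def using a b by (simp add: distrib_left)
    then have "(c * \<beta>1) * (real m * real m) \<le> ((2 * real g * real m) * (2 * sqrt J1 * I) + (real m * real m) * E1 g) * (real m * real m)"
      by (rule mult_right_mono) simp
    then show ?thesis by (simp add: power2_eq_square power3_eq_cube algebra_simps power4_eq_xxxx)
  qed
  have t4: "(\<gamma> * (real m * real m)) * (real m * real m) = real m ^ 4 * (E1 g + E2 g)"
    unfolding \<gamma>_def by (simp add: power4_eq_xxxx algebra_simps)
  show ?thesis unfolding eq using t1 t2 t3 t4 En by (simp add: algebra_simps)
qed

end


context two
begin

definition S :: "nat \<Rightarrow> real \<times> real \<Rightarrow> real" where "S m z = (\<Sum>i<m. \<Sum>j<m. f i j z)"

lemma S_meas[measurable]: "S m \<in> borel_measurable (M1 \<Otimes>\<^sub>M M2)"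
  unfolding S_def by measurable

lemma S_nonneg: "0 \<le> S m z" unfolding S_def using f_bounds by (simp add: sum_nonneg)

lemma S_le: "S m z \<le> real m * real m"
proof -
  have "S m z \<le> (\<Sum>i<m. \<Sum>j<m. 1)" unfolding S_def using f_bounds by (intro sum_mono) auto
  then show ?thesis by simp
qed

lemma int_f[simp]: "integrable (M1 \<Otimes>\<^sub>M M2) (f i j)"
  by (rule bounded_integrable_P[where B=1]) (auto simp: f_def F_def)

lemma int_ff[simp]: "integrable (M1 \<Otimes>\<^sub>M M2) (\<lambda>z. f i j z * f k l z)"
  by (rule bounded_integrable_P[where B=1]) (auto simp: f_def F_def)

lemma int_S[simp]: "integrable (M1 \<Otimes>\<^sub>M M2) (S m)"
  unfolding S_def by simp

lemma int_SS: "integrable (M1 \<Otimes>\<^sub>M M2) (\<lambda>z. S m z * S m z)"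
  by (rule bounded_integrable_P[where B="real m * real m * (real m * real m)"])
     (use S_nonneg S_le in \<open>auto simp: abs_mult intro!: mult_mono\<close>)

lemma ES: "(\<integral>z. S m z \<partial>(M1 \<Otimes>\<^sub>M M2)) = real m * real m * I"
  unfolding S_def by (simp add: E_f)

lemma bq_sym: "bq g k l i j = bq g i j k l"
  unfolding bq_def cl_def by (auto simp: algebra_simps)

lemma ES2: "(\<integral>z. S m z * S m z \<partial>(M1 \<Otimes>\<^sub>M M2)) = (\<Sum>i<m. \<Sum>j<m. \<Sum>k<m. \<Sum>l<m. quad k l i j)"
proof -
  have "(\<lambda>z. S m z * S m z) = (\<lambda>z. \<Sum>i<m. \<Sum>j<m. \<Sum>k<m. \<Sum>l<m. f k l z * f i j z)"
    unfolding S_def by (simp add: sum_distrib_left sum_distrib_right)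
  then show ?thesis by (simp add: quad_def)
qed

lemma bad_eq: "space (M1 \<Otimes>\<^sub>M M2) - E_set X T1 T2 m \<rho> = {z \<in> space (M1 \<Otimes>\<^sub>M M2). S m z = 0}"
proof -
  have sp: "space (M1 \<Otimes>\<^sub>M M2) = X \<times> X" by (simp add: space_pair_measure S1.sp S2.sp)
  have "S m z = 0 \<longleftrightarrow> (\<forall>i<m. \<forall>j<m. f i j z = 0)" for z
    unfolding S_def using f_bounds by (auto simp: sum_nonneg_eq_0_iff sum_nonneg)
  moreover have "f i j z = 0 \<longleftrightarrow> \<not> \<bar>(T1^^i) (fst z) - (T2^^j) (snd z)\<bar> < \<rho>" for i j z
    unfolding f_def F_def by (simp add: dist_real_def)
  ultimately show ?thesis unfolding sp E_set_def by (auto; blast)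
qed

lemma bad_sets: "space (M1 \<Otimes>\<^sub>M M2) - E_set X T1 T2 m \<rho> \<in> sets (M1 \<Otimes>\<^sub>M M2)"
  unfolding bad_eq by measurable

lemma bad_bound:
  assumes m: "m > 0" and I: "I > 0"
  shows "measure (M1 \<Otimes>\<^sub>M M2) (space (M1 \<Otimes>\<^sub>M M2) - E_set X T1 T2 m \<rho>)
     \<le> (4 * real g ^ 2 * real m ^ 2 * I + 4 * real g * real m ^ 3 * (sqrt J1 + sqrt J2) * I
     + 2 * real m ^ 4 * (E1 g + E2 g)) / (real m ^ 4 * I ^ 2)"
proof -
  let ?P = "M1 \<Otimes>\<^sub>M M2"
  define B where "B = space ?P - E_set X T1 T2 m \<rho>"
  define e where "e = real m * real m * I"
  have B: "B \<in> sets ?P" unfolding B_def by (rule bad_sets)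
  have pt: "indicator B z * e^2 \<le> (S m z - e)^2" for z
    by (cases "z \<in> B") (auto simp: B_def bad_eq)
  have "measure ?P B * e^2 = (\<integral>z. indicator B z * e^2 \<partial>?P)"
    using B by simp
  also have "\<dots> \<le> (\<integral>z. (S m z - e)^2 \<partial>?P)"
  proof (rule integral_mono)
    show "integrable ?P (\<lambda>z. indicator B z * e\<^sup>2)"
      using B by (intro integrable_mult_left bounded_integrable_P[where B=1]) auto
    show "integrable ?P (\<lambda>z. (S m z - e)\<^sup>2)"
      using int_SS[of m] by (simp add: power2_eq_square algebra_simps)
  qed (rule pt)
  also have "(\<integral>z. (S m z - e)^2 \<partial>?P) = (\<integral>z. S m z * S m z \<partial>?P) - e^2"
  proof -
    have "(\<lambda>z. (S m z - e)^2) = (\<lambda>z. S m z * S m z + (- 2 * e) * S m z + e^2)"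
      by (rule ext) (simp add: power2_eq_square algebra_simps)
    then have "(\<integral>z. (S m z - e)^2 \<partial>?P) = (\<integral>z. S m z * S m z \<partial>?P) + (- 2 * e) * (\<integral>z. S m z \<partial>?P) + e^2"
      using int_SS[of m] by (simp add: P.prob_space)
    then show ?thesis unfolding ES e_def by (simp add: power2_eq_square)
  qed
  also have "(\<integral>z. S m z * S m z \<partial>?P) \<le> (\<Sum>i<m. \<Sum>j<m. \<Sum>k<m. \<Sum>l<m. I * I + bq g k l i j)"
    unfolding ES2 by (intro sum_mono quad_total)
  also have "\<dots> = e^2 + (\<Sum>i<m. \<Sum>j<m. \<Sum>k<m. \<Sum>l<m. bq g i j k l)"
    by (simp add: sum.distrib e_def power2_eq_square algebra_simps bq_sym)
  finally have "measure ?P B * e^2 \<le> (\<Sum>i<m. \<Sum>j<m. \<Sum>k<m. \<Sum>l<m. bq g i j k l)" by simp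
  also note sum_bq[where m=m and g=g]
  finally have *: "measure ?P B * e^2 \<le> 4 * real g ^ 2 * real m ^ 2 * I + 4 * real g * real m ^ 3 * (sqrt J1 + sqrt J2) * I
     + 2 * real m ^ 4 * (E1 g + E2 g)" .
  have e2: "e^2 = real m ^ 4 * I ^ 2" unfolding e_def by (simp add: power2_eq_square power4_eq_xxxx)
  have pos: "0 < real m ^ 4 * I ^ 2" using m I by simp
  show ?thesis using * pos unfolding B_def[symmetric] e2 by (simp add: pos_le_divide_eq)
qed

end


definition psi :: "real \<Rightarrow> nat \<Rightarrow> real" where
  "psi \<epsilon> n = (if n < 3 then 1 else 1 / (real n * ln (real n) powr (1 + \<epsilon>)))"

lemma ln3_gt1: "1 < ln (3::real)"
proof -
  have "ln (272/100) < ln (3::real)" by (subst ln_less_cancel_iff) auto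
  then show ?thesis using ln_272_gt_1 by linarith
qed

lemma psi_nonneg: "\<epsilon> > 0 \<Longrightarrow> 0 \<le> psi \<epsilon> n"
  unfolding psi_def by auto

lemma psi_mono:
  assumes e: "\<epsilon> > 0" and m: "0 < m"
  shows "psi \<epsilon> (Suc m) \<le> psi \<epsilon> m"
proof (cases "m < 3")
  case True
  show ?thesis
  proof (cases "Suc m < 3")
    case True then show ?thesis using \<open>m<3\<close> by (simp add: psi_def)
  next
    case False
    then have sm: "Suc m = 3" using \<open>m < 3\<close> by simp
    have "1 \<le> ln (3::real) powr (1 + \<epsilon>)" using ln3_gt1 e by (intro ge_one_powr_ge_zero) auto
    then have "1 \<le> 3 * ln (3::real) powr (1 + \<epsilon>)" by linarith
    then have "psi \<epsilon> (Suc m) \<le> 1" unfolding sm psi_def by simp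
    then show ?thesis using \<open>m < 3\<close> by (simp add: psi_def)
  qed
next
  case False
  then have m3: "3 \<le> m" by simp
  have l0: "0 < ln (real m)" using m3 by simp
  have "ln (real m) powr (1 + \<epsilon>) \<le> ln (real (Suc m)) powr (1 + \<epsilon>)"
    using l0 e m3 by (intro powr_mono2) (auto intro!: ln_mono)
  moreover have "0 < ln (real m) powr (1 + \<epsilon>)" using l0 by simp
  ultimately have "real m * ln (real m) powr (1 + \<epsilon>) \<le> real (Suc m) * ln (real (Suc m)) powr (1 + \<epsilon>)"
    by (intro mult_mono) auto
  moreover have "0 < real m * ln (real m) powr (1 + \<epsilon>)" using l0 m3 by simp
  ultimately show ?thesis using m3 unfolding psi_def
    by (simp add: frac_le)
qed

lemma summable_psi:
  assumes e: "\<epsilon> > 0"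
  shows "summable (psi \<epsilon>)"
proof -
  have "summable (\<lambda>n. (2::real)^n * psi \<epsilon> (2^n))"
  proof -
    have s: "summable (\<lambda>n. ln 2 powr (- (1 + \<epsilon>)) * real n powr (- (1 + \<epsilon>)))"
      by (rule summable_mult) (use e in \<open>simp add: summable_real_powr_iff\<close>)
    have "eventually (\<lambda>n. (2::real)^n * psi \<epsilon> (2^n) = ln 2 powr (- (1 + \<epsilon>)) * real n powr (- (1 + \<epsilon>))) sequentially"
      using eventually_ge_at_top[of "2::nat"]
    proof eventually_elim
      case (elim n)
      have "(4::nat) \<le> 2^n" using power_increasing[OF elim, of "2::nat"] by simp
      then have n3: "\<not> (2::nat)^n < 3" by simp
      have ln: "ln (real (2^n)) = real n * ln 2" by (simp add: ln_realpow)
      have pos: "0 < real n" "0 < ln (2::real)" using elim by auto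
      have "(2::real)^n * psi \<epsilon> (2^n) = 1 / ((real n * ln 2) powr (1 + \<epsilon>))"
        unfolding psi_def using n3 ln by simp
      also have "\<dots> = (real n * ln 2) powr (- (1 + \<epsilon>))" by (simp only: powr_minus_divide)
      also have "\<dots> = ln 2 powr (- (1 + \<epsilon>)) * real n powr (- (1 + \<epsilon>))"
        using pos by (simp add: powr_mult)
      finally show ?case .
    qed
    then show ?thesis using s by (rule summable_cong[THEN iffD2])
  qed
  then show ?thesis
    using condensation_test[of "psi \<epsilon>"] psi_mono[OF e] psi_nonneg[OF e] by blast
qed


lemma exp_part:
  fixes \<theta> :: real and k D :: nat
  assumes th: "5 * ln 2 \<le> \<theta> * real D"
  shows "((2::real)^k)^4 * exp (- \<theta> * real (D * (k+1))) \<le> (1/2)^k"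
proof -
  have "exp (real (4*k) * ln 2) = exp (ln 2) ^ (4*k)" by (rule exp_of_nat_mult)
  also have "\<dots> = ((2::real)^k)^4" by (simp add: power_mult[symmetric] mult.commute)
  finally have a: "((2::real)^k)^4 = exp (4 * real k * ln 2)" by simp
  have b: "((1::real)/2)^k = exp (- real k * ln 2)"
  proof -
    have "exp (real k * ln 2) = exp (ln 2) ^ k" by (rule exp_of_nat_mult)
    then have "exp (real k * ln 2) = (2::real) ^ k" by simp
    then have "exp (- real k * ln 2) = inverse ((2::real)^k)" by (simp add: exp_minus)
    also have "\<dots> = 1 / 2^k" by (simp only: inverse_eq_divide)
    also have "\<dots> = (1/2)^k" by (simp only: power_one_over)
    finally show ?thesis by simp
  qed
  have "4 * real k * ln 2 + (- \<theta> * real (D * (k+1))) \<le> - real k * ln 2"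
  proof -
    have "5 * ln 2 * real (k+1) \<le> \<theta> * real D * real (k+1)"
      by (rule mult_right_mono[OF th]) simp
    moreover have "0 \<le> ln (2::real)" by simp
    ultimately show ?thesis by (simp add: algebra_simps, linarith)
  qed
  then have "exp (4 * real k * ln 2) * exp (- \<theta> * real (D * (k+1))) \<le> exp (- real k * ln 2)"
    by (simp add: exp_add[symmetric])
  then show ?thesis unfolding a b .
qed

lemma cancel3: "(x::real) \<noteq> 0 \<Longrightarrow> (a * x) / (x * y) = a / y" by simp

lemma numeric:
  fixes I s1 s2 c0 c1 C1 C2 \<theta>1 \<theta>2 \<epsilon> m lam L :: real and k D :: nat
  assumes m: "m = (2::real)^k" and lam: "lam = real (k+1) * ln 2"
    and pos: "I > 0" "0 \<le> s1" "0 \<le> s2" "c0 > 0" "c1 > 0" "C1 > 0" "C2 > 0" "1 \<le> lam" "1 \<le> L"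
    and lowI: "c0 * lam^3 * L / (4 * m^2) \<le> I"
    and r1: "s1 \<le> 2 * c1 * m * I / (lam^2 * L)" and r2: "s2 \<le> 2 * c1 * m * I / (lam^2 * L)"
    and th1: "5 * ln 2 \<le> \<theta>1 * real D" and th2: "5 * ln 2 \<le> \<theta>2 * real D"
  shows "(4 * real (D*(k+1)) ^ 2 * m ^ 2 * I + 4 * real (D*(k+1)) * m ^ 3 * (s1 + s2) * I
     + 2 * m ^ 4 * (3 * C1 * exp (- \<theta>1 * real (D*(k+1))) + 3 * C2 * exp (- \<theta>2 * real (D*(k+1))))) / (m ^ 4 * I ^ 2)
     \<le> (16 * real D ^ 2 / ((ln 2)^2 * c0) + 16 * c1 * real D / ln 2) / (lam * L) + 96 * (C1 + C2) / c0^2 * (1/2)^k"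
proof -
  define g where "g = real (D*(k+1))"
  define E where "E = 3 * C1 * exp (- \<theta>1 * g) + 3 * C2 * exp (- \<theta>2 * g)"
  have mpos: "m > 0" unfolding m by simp
  have ln2: "0 < ln (2::real)" by simp
  have g0: "0 \<le> g" unfolding g_def by simp
  have gl: "g * ln 2 = real D * lam" unfolding g_def lam by (simp add: algebra_simps)
  have L0: "0 < L" "0 < lam" using pos by auto
  have E0: "0 \<le> E" unfolding E_def using pos by simp
  have mI: "m^2 * I \<noteq> 0" "m * I \<noteq> 0" "m^3 * I \<noteq> 0" "m^4 \<noteq> 0" using mpos pos(1) by auto
  have sp1: "4 * g ^ 2 * m ^ 2 * I / (m ^ 4 * I ^ 2) = 4 * g^2 / (m^2 * I)"
  proof -
    have "4 * g ^ 2 * m ^ 2 * I = (4 * g^2) * (m^2 * I)" by simp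
    moreover have "m ^ 4 * I ^ 2 = (m^2 * I) * (m^2 * I)" by (simp add: power2_eq_square power4_eq_xxxx)
    ultimately show ?thesis using cancel3[OF mI(1)] by simp
  qed
  have sp2: "4 * g * m ^ 3 * (s1 + s2) * I / (m ^ 4 * I ^ 2) = 4 * g * (s1 + s2) / (m * I)"
  proof -
    have "4 * g * m ^ 3 * (s1 + s2) * I = (4 * g * (s1 + s2)) * (m^3 * I)" by simp
    moreover have "m ^ 4 * I ^ 2 = (m^3 * I) * (m * I)" by (simp add: power2_eq_square power4_eq_xxxx power3_eq_cube)
    ultimately show ?thesis using cancel3[OF mI(3)] by simp
  qed
  have sp3: "2 * m ^ 4 * E / (m ^ 4 * I ^ 2) = 2 * E / I^2"
  proof -
    have "2 * m ^ 4 * E = (2 * E) * m ^ 4" by simp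
    moreover have "m ^ 4 * I ^ 2 = m^4 * I^2" by simp
    ultimately show ?thesis using cancel3[OF mI(4), of "2 * E" "I^2"] by simp
  qed
  have split: "(4 * g ^ 2 * m ^ 2 * I + 4 * g * m ^ 3 * (s1 + s2) * I + 2 * m ^ 4 * E) / (m ^ 4 * I ^ 2)
      = 4 * g^2 / (m^2 * I) + 4 * g * (s1 + s2) / (m * I) + 2 * E / I^2"
    unfolding add_divide_distrib sp1 sp2 sp3 ..
  define B where "B = c0 * lam^3 * L / (4 * m^2)"
  have B0: "0 < B" unfolding B_def using pos L0 mpos by simp
  have mB: "m^2 * B = c0 * lam^3 * L / 4" unfolding B_def using mpos by simp
  have t1: "4 * g^2 / (m^2 * I) \<le> (16 * real D ^ 2 / ((ln 2)^2 * c0)) / (lam * L)"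
  proof -
    have "m^2 * B \<le> m^2 * I" using lowI unfolding B_def[symmetric] by (intro mult_left_mono) auto
    then have "4 * g^2 / (m^2 * I) \<le> 4 * g^2 / (m^2 * B)"
      using B0 mpos g0 by (intro divide_left_mono) auto
    also have "\<dots> = 16 * g^2 / (c0 * lam^3 * L)" unfolding mB by simp
    also have "\<dots> = (16 * real D ^ 2 / ((ln 2)^2 * c0)) / (lam * L)"
    proof -
      have "g = real D * lam / ln 2" using gl ln2 by (simp add: eq_divide_eq)
      then have "g^2 = real D ^ 2 * lam^2 / (ln 2)^2" by (simp add: power_divide power_mult_distrib)
      then show ?thesis using pos L0 ln2 by (simp add: power2_eq_square power3_eq_cube)
    qed
    finally show ?thesis .
  qed
  have t2: "4 * g * (s1 + s2) / (m * I) \<le> (16 * c1 * real D / ln 2) / (lam * L)"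
  proof -
    have "4 * g * (s1 + s2) \<le> 4 * g * (4 * c1 * m * I / (lam^2 * L))"
    proof (rule mult_left_mono)
      have "2 * c1 * m * I / (lam^2 * L) + 2 * c1 * m * I / (lam^2 * L) = 4 * c1 * m * I / (lam^2 * L)"
        by (simp add: add_divide_distrib[symmetric])
      moreover have "s1 + s2 \<le> 2 * c1 * m * I / (lam^2 * L) + 2 * c1 * m * I / (lam^2 * L)"
        using r1 r2 by (rule add_mono)
      ultimately show "s1 + s2 \<le> 4 * c1 * m * I / (lam^2 * L)" by simp
    qed (use g0 in simp)
    then have "4 * g * (s1 + s2) / (m * I) \<le> 4 * g * (4 * c1 * m * I / (lam^2 * L)) / (m * I)"
      using mpos pos(1) by (intro divide_right_mono) auto
    also have "\<dots> = 16 * c1 * g / (lam^2 * L)" using mI by simp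
    also have "\<dots> = (16 * c1 * real D / ln 2) / (lam * L)"
    proof -
      have "g = real D * lam / ln 2" using gl ln2 by (simp add: eq_divide_eq)
      then show ?thesis using pos L0 ln2 by (simp add: power2_eq_square)
    qed
    finally show ?thesis .
  qed
  have t3: "2 * E / I^2 \<le> 96 * (C1 + C2) / c0^2 * (1/2)^k"
  proof -
    have "c0^2 / (16 * m^4) \<le> B^2"
    proof -
      have "1 \<le> lam^3" using pos by (simp add: one_le_power)
      then have "1 * 1 \<le> lam^3 * L" using pos by (intro mult_mono) auto
      then have "1 \<le> (lam^3 * L)^2" by (simp add: one_le_power)
      then have "c0^2 / (16 * m^4) * 1 \<le> c0^2 / (16 * m^4) * (lam^3 * L)^2"
        using mpos pos by (intro mult_left_mono) auto
      also have "\<dots> = B^2" unfolding B_def by (simp add: power2_eq_square power4_eq_xxxx mult_ac)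
      finally show ?thesis by simp
    qed
    also have "B^2 \<le> I^2" using lowI B0 unfolding B_def[symmetric] by (intro power_mono) auto
    finally have I2: "c0^2 / (16 * m^4) \<le> I^2" .
    have "2 * E / I^2 \<le> 2 * E / (c0^2 / (16 * m^4))"
      using I2 E0 pos mpos by (intro divide_left_mono) auto
    also have "\<dots> = 32 * (m^4 * E) / c0^2" using pos mpos by simp
    also have "m^4 * E \<le> 3 * (C1 + C2) * (1/2)^k"
    proof -
      have e1: "m^4 * exp (- \<theta>1 * g) \<le> (1/2)^k" unfolding m g_def by (rule exp_part[OF th1])
      have e2: "m^4 * exp (- \<theta>2 * g) \<le> (1/2)^k" unfolding m g_def by (rule exp_part[OF th2])
      have "m^4 * E = 3 * C1 * (m^4 * exp (- \<theta>1 * g)) + 3 * C2 * (m^4 * exp (- \<theta>2 * g))"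
        unfolding E_def by (simp add: algebra_simps)
      also have "\<dots> \<le> 3 * C1 * (1/2)^k + 3 * C2 * (1/2)^k"
        using e1 e2 pos by (intro add_mono mult_left_mono) auto
      finally show ?thesis by (simp add: algebra_simps)
    qed
    then have "32 * (m^4 * E) / c0^2 \<le> 32 * (3 * (C1 + C2) * (1/2)^k) / c0^2"
      using pos by (intro divide_right_mono) auto
    also have "\<dots> = 96 * (C1 + C2) / c0^2 * (1/2)^k" by simp
    finally show ?thesis .
  qed
  have "(4 * g ^ 2 * m ^ 2 * I + 4 * g * m ^ 3 * (s1 + s2) * I + 2 * m ^ 4 * E) / (m ^ 4 * I ^ 2)
     \<le> (16 * real D ^ 2 / ((ln 2)^2 * c0)) / (lam * L) + (16 * c1 * real D / ln 2) / (lam * L) + 96 * (C1 + C2) / c0^2 * (1/2)^k"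
    unfolding split by (rule add_mono[OF add_mono[OF t1 t2] t3])
  then show ?thesis unfolding g_def[symmetric] E_def[symmetric] add_divide_distrib[symmetric] .
qed


lemma global_bad_sets:
  fixes X :: "real set" and M1 M2 :: "real measure" and T1 T2 :: "real \<Rightarrow> real"
  assumes s1: "sys X M1 T1" and s2: "sys X M2 T2" and rho: "\<rho> > 0" and C: "C1 > 0" "C2 > 0"
   and mix1: "\<And>\<psi> \<phi> i k g. nice \<psi> \<Longrightarrow> nice \<phi> \<Longrightarrow> (i + g \<le> k \<or> k + g \<le> i) \<Longrightarrow>
     \<bar>(\<integral>x. \<psi> ((T1^^i) x) * \<phi> ((T1^^k) x) \<partial>M1) - integral\<^sup>L M1 \<psi> * integral\<^sup>L M1 \<phi>\<bar> \<le> 3 * C1 * exp (- \<theta>1 * real g)"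
   and mix2: "\<And>\<psi> \<phi> i k g. nice \<psi> \<Longrightarrow> nice \<phi> \<Longrightarrow> (i + g \<le> k \<or> k + g \<le> i) \<Longrightarrow>
     \<bar>(\<integral>x. \<psi> ((T2^^i) x) * \<phi> ((T2^^k) x) \<partial>M2) - integral\<^sup>L M2 \<psi> * integral\<^sup>L M2 \<phi>\<bar> \<le> 3 * C2 * exp (- \<theta>2 * real g)"
  shows "space (M1 \<Otimes>\<^sub>M M2) - E_set X T1 T2 m \<rho> \<in> sets (M1 \<Otimes>\<^sub>M M2)"
proof -
  interpret two X M1 T1 M2 T2 \<rho> C1 \<theta>1 C2 \<theta>2
    by (intro two.intro s1 s2 two_axioms.intro rho C mix1 mix2) auto
  show ?thesis by (rule bad_sets)
qed

lemma global_bad: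
  fixes X :: "real set" and M1 M2 :: "real measure" and T1 T2 :: "real \<Rightarrow> real"
  assumes s1: "sys X M1 T1" and s2: "sys X M2 T2" and rho: "\<rho> > 0" and C: "C1 > 0" "C2 > 0"
   and mix1: "\<And>\<psi> \<phi> i k g. nice \<psi> \<Longrightarrow> nice \<phi> \<Longrightarrow> (i + g \<le> k \<or> k + g \<le> i) \<Longrightarrow>
     \<bar>(\<integral>x. \<psi> ((T1^^i) x) * \<phi> ((T1^^k) x) \<partial>M1) - integral\<^sup>L M1 \<psi> * integral\<^sup>L M1 \<phi>\<bar> \<le> 3 * C1 * exp (- \<theta>1 * real g)"
   and mix2: "\<And>\<psi> \<phi> i k g. nice \<psi> \<Longrightarrow> nice \<phi> \<Longrightarrow> (i + g \<le> k \<or> k + g \<le> i) \<Longrightarrow>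
     \<bar>(\<integral>x. \<psi> ((T2^^i) x) * \<phi> ((T2^^k) x) \<partial>M2) - integral\<^sup>L M2 \<psi> * integral\<^sup>L M2 \<phi>\<bar> \<le> 3 * C2 * exp (- \<theta>2 * real g)"
   and m: "m > 0" and Ipos: "(\<integral>y. measure M1 (ball y \<rho> \<inter> X) \<partial>M2) > 0"
  shows "
     measure (M1 \<Otimes>\<^sub>M M2) (space (M1 \<Otimes>\<^sub>M M2) - E_set X T1 T2 m \<rho>)
     \<le> (4 * real g ^ 2 * real m ^ 2 * (\<integral>y. measure M1 (ball y \<rho> \<inter> X) \<partial>M2)
        + 4 * real g * real m ^ 3 * (sqrt (\<integral>y. measure M1 (ball y \<rho> \<inter> X) \<partial>M1) + sqrt (\<integral>y. measure M2 (ball y \<rho> \<inter> X) \<partial>M2))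
           * (\<integral>y. measure M1 (ball y \<rho> \<inter> X) \<partial>M2)
     + 2 * real m ^ 4 * (3 * C1 * exp (- \<theta>1 * real g) + 3 * C2 * exp (- \<theta>2 * real g)))
      / (real m ^ 4 * (\<integral>y. measure M1 (ball y \<rho> \<inter> X) \<partial>M2) ^ 2)"
proof -
  interpret two X M1 T1 M2 T2 \<rho> C1 \<theta>1 C2 \<theta>2
    by (intro two.intro s1 s2 two_axioms.intro rho C mix1 mix2) auto
  have "I > 0" using Ipos unfolding I_def h1_def .
  then show ?thesis
    using bad_bound[OF m, of g] unfolding I_def J1_def J2_def h1_def h2_def E1_def E2_def by simp
qed

lemma E_set_mono: "m1 \<le> m2 \<Longrightarrow> \<rho>1 \<le> \<rho>2 \<Longrightarrow> E_set X T1 T2 m1 \<rho>1 \<subseteq> E_set X T1 T2 m2 \<rho>2"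
  unfolding E_set_def by clarsimp (metis order_less_le_trans)

lemma E_set_sub: "E_set X T1 T2 m \<rho> \<subseteq> X \<times> X" unfolding E_set_def by auto

lemma lam_bounds:
  fixes k :: nat assumes k: "k \<ge> 5"
  shows "1 \<le> real (k+1) * ln 2" "1 \<le> ln (real (k+1) * ln 2)"
    "real (k+1) / 2 \<le> real (k+1) * ln 2" "ln (real (k+1)) / 2 \<le> ln (real (k+1) * ln 2)"
proof -
  have l2: "2/3 \<le> ln (2::real)" by (rule ln2_ge_two_thirds)
  have k6: "6 \<le> real (k+1)" using k by simp
  have a: "4 \<le> real (k+1) * ln 2" using mult_mono[OF k6 l2] by simp
  show "1 \<le> real (k+1) * ln 2" using a by simp
  have "exp 1 \<le> real (k+1) * ln 2" using exp_le a by linarith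
  then show "1 \<le> ln (real (k+1) * ln 2)" by (metis exp_gt_zero ln_exp ln_le_cancel_iff order_less_le_trans)
  show "real (k+1) / 2 \<le> real (k+1) * ln 2" using l2 by simp
  have sq: "sqrt (real (k+1)) \<le> real (k+1) * ln 2"
  proof -
    have s2: "2 \<le> sqrt (real (k+1))" using k6 by (simp add: real_le_rsqrt)
    have "1 \<le> sqrt (real (k+1)) * ln 2" using mult_mono[OF s2 l2] by simp
    then have "sqrt (real (k+1)) * 1 \<le> sqrt (real (k+1)) * (sqrt (real (k+1)) * ln 2)"
      by (intro mult_left_mono) auto
    then show ?thesis by (simp add: mult.assoc[symmetric])
  qed
  have "ln (sqrt (real (k+1))) \<le> ln (real (k+1) * ln 2)"
    using sq k6 by (subst ln_le_cancel_iff) auto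
  then show "ln (real (k+1)) / 2 \<le> ln (real (k+1) * ln 2)" by (simp add: ln_sqrt)
qed


theorem mainTheorem3:
  fixes X :: "real set" and M1 M2 :: "real measure" and T1 T2 :: "real \<Rightarrow> real"
    and r :: "nat \<Rightarrow> real" and \<epsilon> c0 c1 :: real
  assumes sp1: "space M1 = X" and sets1: "sets M1 = sets (restrict_space borel X)"
    and sp2: "space M2 = X" and sets2: "sets M2 = sets (restrict_space borel X)"
    and prob1: "prob_space M1" and prob2: "prob_space M2"
    and mp1: "measure_preserving_map M1 T1" and mp2: "measure_preserving_map M2 T2"
    and mix1: "exp_mixing_BV_Linf X M1 T1" and mix2: "exp_mixing_BV_Linf X M2 T2"
    and r_pos: "\<And>n. r n > 0" and r_dec: "decseq r"
    and eps: "\<epsilon> > 0" and c0: "c0 > 0" and c1: "c1 > 0"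
    and lower: "eventually (\<lambda>n. (\<integral>y. measure M1 (ball y (r n) \<inter> X) \<partial>M2)
        \<ge> c0 * (ln (real n)) ^ 3 * (ln (ln (real n))) powr (1 + \<epsilon>) / (real n)^2) sequentially"
    and ratio1: "eventually (\<lambda>n. sqrt (\<integral>y. measure M1 (ball y (r n) \<inter> X) \<partial>M1)
          / (\<integral>y. measure M1 (ball y (r n) \<inter> X) \<partial>M2)
        \<le> c1 * real n / ((ln (real n)) ^ 2 * (ln (ln (real n))) powr (1 + \<epsilon>))) sequentially"
    and ratio2: "eventually (\<lambda>n. sqrt (\<integral>y. measure M2 (ball y (r n) \<inter> X) \<partial>M2)
          / (\<integral>y. measure M1 (ball y (r n) \<inter> X) \<partial>M2)
        \<le> c1 * real n / ((ln (real n)) ^ 2 * (ln (ln (real n))) powr (1 + \<epsilon>))) sequentially"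
  shows "measure (M1 \<Otimes>\<^sub>M M2) (\<Union>N. \<Inter>n\<in>{N..}. E_set X T1 T2 n (r n)) = 1"
proof -
  have sys1: "sys X M1 T1" by (intro sys.intro sp1 sets1 prob1 mp1)
  have sys2: "sys X M2 T2" by (intro sys.intro sp2 sets2 prob2 mp2)
  interpret S1: sys X M1 T1 by (rule sys1)
  interpret S2: sys X M2 T2 by (rule sys2)
  interpret P: pair_prob_space M1 M2 by unfold_locales
  let ?P = "M1 \<Otimes>\<^sub>M M2"
  obtain C1 \<theta>1 where C1: "C1 > 0" "\<theta>1 > 0" and mx1: "\<And>\<psi> \<phi> i k g. nice \<psi> \<Longrightarrow> nice \<phi> \<Longrightarrow> (i + g \<le> k \<or> k + g \<le> i) \<Longrightarrow>
     \<bar>(\<integral>x. \<psi> ((T1^^i) x) * \<phi> ((T1^^k) x) \<partial>M1) - integral\<^sup>L M1 \<psi> * integral\<^sup>L M1 \<phi>\<bar> \<le> 3 * C1 * exp (- \<theta>1 * real g)"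
    using S1.mix_two_sided[OF mix1] by blast
  obtain C2 \<theta>2 where C2: "C2 > 0" "\<theta>2 > 0" and mx2: "\<And>\<psi> \<phi> i k g. nice \<psi> \<Longrightarrow> nice \<phi> \<Longrightarrow> (i + g \<le> k \<or> k + g \<le> i) \<Longrightarrow>
     \<bar>(\<integral>x. \<psi> ((T2^^i) x) * \<phi> ((T2^^k) x) \<partial>M2) - integral\<^sup>L M2 \<psi> * integral\<^sup>L M2 \<phi>\<bar> \<le> 3 * C2 * exp (- \<theta>2 * real g)"
    using S2.mix_two_sided[OF mix2] by blast
  have Esets: "space ?P - E_set X T1 T2 m \<rho> \<in> sets ?P" if "\<rho> > 0" for m \<rho>
    by (rule global_bad_sets[OF sys1 sys2 that C1(1) C2(1) mx1 mx2])
  have spP: "space ?P = X \<times> X" by (simp add: space_pair_measure sp1 sp2)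
  have Esets2[measurable]: "E_set X T1 T2 n (r n) \<in> sets ?P" for n
  proof -
    have "E_set X T1 T2 n (r n) = space ?P - (space ?P - E_set X T1 T2 n (r n))"
      using E_set_sub[of X T1 T2 n "r n"] spP by auto
    then show ?thesis using Esets[OF r_pos, of n] by (metis sets.compl_sets)
  qed
  define A where "A k = space ?P - E_set X T1 T2 (2^k) (r (2^(k+1)))" for k
  have A_sets: "A k \<in> sets ?P" for k unfolding A_def by (rule Esets[OF r_pos])
  define D where "D = nat \<lceil>5 * ln 2 / \<theta>1 + 5 * ln 2 / \<theta>2\<rceil>"
  have Dge: "5 * ln 2 / \<theta>1 + 5 * ln 2 / \<theta>2 \<le> real D" unfolding D_def by (rule real_nat_ceiling_ge)
  have th1: "5 * ln 2 \<le> \<theta>1 * real D"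
  proof -
    have "5 * ln 2 / \<theta>1 \<le> real D" using Dge C2 by (smt (verit) divide_nonneg_pos ln_ge_zero)
    then show ?thesis using C1 by (simp add: divide_le_eq mult.commute)
  qed
  have th2: "5 * ln 2 \<le> \<theta>2 * real D"
  proof -
    have "5 * ln 2 / \<theta>2 \<le> real D" using Dge C1 by (smt (verit) divide_nonneg_pos ln_ge_zero)
    then show ?thesis using C2 by (simp add: divide_le_eq mult.commute)
  qed
  obtain N0 where N0: "\<And>n. n \<ge> N0 \<Longrightarrow>
      (\<integral>y. measure M1 (ball y (r n) \<inter> X) \<partial>M2) \<ge> c0 * (ln (real n)) ^ 3 * (ln (ln (real n))) powr (1 + \<epsilon>) / (real n)^2
    \<and> sqrt (\<integral>y. measure M1 (ball y (r n) \<inter> X) \<partial>M1) / (\<integral>y. measure M1 (ball y (r n) \<inter> X) \<partial>M2)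
        \<le> c1 * real n / ((ln (real n)) ^ 2 * (ln (ln (real n))) powr (1 + \<epsilon>))
    \<and> sqrt (\<integral>y. measure M2 (ball y (r n) \<inter> X) \<partial>M2) / (\<integral>y. measure M1 (ball y (r n) \<inter> X) \<partial>M2)
        \<le> c1 * real n / ((ln (real n)) ^ 2 * (ln (ln (real n))) powr (1 + \<epsilon>))"
    using eventually_conj[OF lower eventually_conj[OF ratio1 ratio2]] unfolding eventually_sequentially by blast
  define Ac where "Ac = 16 * real D ^ 2 / ((ln 2)^2 * c0) + 16 * c1 * real D / ln 2"
  define Bc where "Bc = 96 * (C1 + C2) / c0^2"
  define Kc where "Kc = Ac * (2 * 2 powr (1 + \<epsilon>))"
  have Ac0: "0 \<le> Ac" unfolding Ac_def using c0 c1 by simp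
  have key: "measure ?P (A k) \<le> Kc * psi \<epsilon> (Suc k) + Bc * (1/2)^k" if k: "k \<ge> max N0 5" for k
  proof -
    define n where "n = (2::nat)^(k+1)"
    define \<rho> where "\<rho> = r n"
    define I where "I = (\<integral>y. measure M1 (ball y \<rho> \<inter> X) \<partial>M2)"
    define s1 where "s1 = sqrt (\<integral>y. measure M1 (ball y \<rho> \<inter> X) \<partial>M1)"
    define s2 where "s2 = sqrt (\<integral>y. measure M2 (ball y \<rho> \<inter> X) \<partial>M2)"
    define m where "m = (2::real)^k"
    define lam where "lam = real (k+1) * ln 2"
    define L where "L = ln lam powr (1 + \<epsilon>)"
    have k5: "k \<ge> 5" using k by simp
    have a1: "N0 \<le> k" using k by simp
    have a0: "k < 2^k" by (rule less_exp)
    have a2: "k \<le> 2 * 2^k" using a0 by linarith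
    have nN0: "n \<ge> N0" using a1 a2 unfolding n_def by simp
    have rn: "real n = 2 * m" unfolding n_def m_def by simp
    have rn0: "real n = (2::real)^(k+1)" unfolding n_def by (simp only: of_nat_power of_nat_numeral)
    have "ln ((2::real)^(k+1)) = real (k+1) * ln 2" by (rule ln_realpow)
    then have lnn: "ln (real n) = lam" unfolding lam_def rn0 .
    have mpos: "0 < m" unfolding m_def by simp
    have rn2: "(real n)^2 = 4 * m^2" unfolding rn by (simp add: power2_eq_square)
    have lb: "1 \<le> lam" "1 \<le> ln lam" "real (k+1) / 2 \<le> lam" "ln (real (k+1)) / 2 \<le> ln lam"
      using lam_bounds[OF k5] unfolding lam_def by auto
    have L1: "1 \<le> L" unfolding L_def using lb eps by (intro ge_one_powr_ge_zero) auto
    have low: "c0 * lam ^ 3 * L / (4 * m^2) \<le> I"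
      and r1': "s1 / I \<le> c1 * (2 * m) / (lam ^ 2 * L)" and r2': "s2 / I \<le> c1 * (2 * m) / (lam ^ 2 * L)"
      using N0[OF nN0] unfolding I_def s1_def s2_def L_def \<rho>_def lnn rn2 by (auto simp: rn)
    have Ipos: "0 < I"
    proof -
      have "0 < c0 * lam ^ 3 * L / (4 * m^2)" using c0 lb L1 mpos by simp
      then show ?thesis using low by linarith
    qed
    have r1: "s1 \<le> 2 * c1 * m * I / (lam ^ 2 * L)"
    proof -
      have "s1 \<le> c1 * (2 * m) / (lam ^ 2 * L) * I" using r1' Ipos by (simp add: pos_divide_le_eq)
      then show ?thesis by (simp add: mult_ac)
    qed
    have r2: "s2 \<le> 2 * c1 * m * I / (lam ^ 2 * L)"
    proof -
      have "s2 \<le> c1 * (2 * m) / (lam ^ 2 * L) * I" using r2' Ipos by (simp add: pos_divide_le_eq)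
      then show ?thesis by (simp add: mult_ac)
    qed
    have s0: "0 \<le> s1" "0 \<le> s2" unfolding s1_def s2_def by auto
    have gb: "measure ?P (A k) \<le> (4 * real (D*(k+1)) ^ 2 * m ^ 2 * I + 4 * real (D*(k+1)) * m ^ 3 * (s1 + s2) * I
     + 2 * m ^ 4 * (3 * C1 * exp (- \<theta>1 * real (D*(k+1))) + 3 * C2 * exp (- \<theta>2 * real (D*(k+1))))) / (m ^ 4 * I ^ 2)"
    proof -
      have rm: "real ((2::nat)^k) = m" unfolding m_def by simp
      have p2: "0 < (2::nat)^k" by simp
      have eqA: "A k = space ?P - E_set X T1 T2 (2^k) \<rho>" unfolding A_def \<rho>_def n_def by simp
      note gb0 = global_bad[where \<rho>="\<rho>" and m="2^k" and g="D*(k+1)",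
          OF sys1 sys2 r_pos[of n, folded \<rho>_def] C1(1) C2(1) mx1 mx2 p2 Ipos[unfolded I_def]]
      have rm': "real ((2::nat)^k) = (2::real)^k" by (simp only: of_nat_power of_nat_numeral)
      show ?thesis unfolding eqA I_def s1_def s2_def m_def using gb0 unfolding rm' .
    qed
    have num: "(4 * real (D*(k+1)) ^ 2 * m ^ 2 * I + 4 * real (D*(k+1)) * m ^ 3 * (s1 + s2) * I
     + 2 * m ^ 4 * (3 * C1 * exp (- \<theta>1 * real (D*(k+1))) + 3 * C2 * exp (- \<theta>2 * real (D*(k+1))))) / (m ^ 4 * I ^ 2)
     \<le> Ac / (lam * L) + Bc * (1/2)^k"
      unfolding Ac_def Bc_def
      by (rule numeric[OF m_def lam_def Ipos s0 c0 c1 C1(1) C2(1) lb(1) L1 low r1 r2 th1 th2])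
    have ps: "Ac / (lam * L) \<le> Kc * psi \<epsilon> (Suc k)"
    proof -
      define Q where "Q = real (Suc k) * ln (real (Suc k)) powr (1 + \<epsilon>)"
      have lk: "0 < ln (real (Suc k))" using k5 by simp
      have Q0: "0 < Q" unfolding Q_def using lk by simp
      have psiQ: "psi \<epsilon> (Suc k) = 1 / Q" unfolding psi_def Q_def using k5 by simp
      have "(ln (real (k+1)) / 2) powr (1 + \<epsilon>) \<le> L"
        unfolding L_def using lb lk eps by (intro powr_mono2) auto
      then have Lb: "ln (real (k+1)) powr (1 + \<epsilon>) / 2 powr (1 + \<epsilon>) \<le> L"
        using lk by (simp add: powr_divide)
      have "Q / (2 * 2 powr (1 + \<epsilon>)) = (real (k+1) / 2) * (ln (real (k+1)) powr (1 + \<epsilon>) / 2 powr (1 + \<epsilon>))"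
        unfolding Q_def by simp
      also have "\<dots> \<le> lam * L"
        using lb(3) Lb lk by (intro mult_mono) auto
      finally have QL: "Q / (2 * 2 powr (1 + \<epsilon>)) \<le> lam * L" .
      have "1 / (lam * L) \<le> 1 / (Q / (2 * 2 powr (1 + \<epsilon>)))"
        using QL Q0 lb(1) L1 by (intro divide_left_mono) (auto intro!: mult_pos_pos divide_pos_pos)
      also have "\<dots> = (2 * 2 powr (1 + \<epsilon>)) * psi \<epsilon> (Suc k)" unfolding psiQ by simp
      finally have "1 / (lam * L) \<le> (2 * 2 powr (1 + \<epsilon>)) * psi \<epsilon> (Suc k)" .
      then have "Ac * (1 / (lam * L)) \<le> Ac * ((2 * 2 powr (1 + \<epsilon>)) * psi \<epsilon> (Suc k))"
        using Ac0 by (rule mult_left_mono)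
      then show ?thesis unfolding Kc_def by (simp add: mult_ac)
    qed
    show ?thesis using gb num ps by linarith
  qed
  have summ: "summable (\<lambda>k. Kc * psi \<epsilon> (Suc k) + Bc * (1/2)^k)"
    by (intro summable_add summable_mult)
       (auto simp: summable_Suc_iff[where f="psi \<epsilon>"] summable_psi[OF eps] summable_geometric)
  have summA: "summable (\<lambda>k. measure ?P (A k))"
  proof (rule summable_comparison_test_ev[OF _ summ])
    show "\<forall>\<^sub>F k in sequentially. norm (measure ?P (A k)) \<le> Kc * psi \<epsilon> (Suc k) + Bc * (1/2)^k"
      using key unfolding eventually_sequentially by (intro exI[of _ "max N0 5"]) auto
  qed
  have AE: "AE z in ?P. eventually (\<lambda>k. z \<in> space ?P - A k) sequentially"
    by (rule borel_cantelli_AE1[OF A_sets _ summA]) (simp add: less_top[symmetric])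
  have L_sets: "(\<Union>N. \<Inter>n\<in>{N..}. E_set X T1 T2 n (r n)) \<in> sets ?P" by measurable
  have "AE z in ?P. z \<in> (\<Union>N. \<Inter>n\<in>{N..}. E_set X T1 T2 n (r n))"
    using AE
  proof (rule eventually_mono)
    fix z assume ev: "eventually (\<lambda>k. z \<in> space ?P - A k) sequentially"
    then obtain K where K: "\<And>k. k \<ge> K \<Longrightarrow> z \<in> space ?P - A k" unfolding eventually_sequentially by blast
    have "z \<in> E_set X T1 T2 n (r n)" if n: "n \<ge> 2^K" for n
    proof -
      have "n \<ge> 1" using n by (metis le_trans one_le_numeral one_le_power)
      then obtain k where k: "2^k \<le> n" "n < 2^(k+1)" using ex_power_ivl1[of 2 n] by auto
      have "K \<le> k"
      proof (rule ccontr)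
        assume "\<not> K \<le> k"
        then have "k + 1 \<le> K" by simp
        then have "(2::nat)^(k+1) \<le> 2^K" by (rule power_increasing) simp
        then show False using k n by simp
      qed
      then have "z \<in> E_set X T1 T2 (2^k) (r (2^(k+1)))" using K[of k] unfolding A_def by auto
      moreover have "r (2^(k+1)) \<le> r n" using r_dec k(2) unfolding decseq_def by simp
      ultimately show ?thesis using E_set_mono[OF k(1)] by blast
    qed
    then show "z \<in> (\<Union>N. \<Inter>n\<in>{N..}. E_set X T1 T2 n (r n))" by blast
  qed
  then show ?thesis using P.prob_eq_1[OF L_sets] by simp
qed

end
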